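(* Let $\Sigma$ be a signed graph. Write $X_\Sigma$ as a polynomial with rational coefficients in the elements of $\{\xi_n : n\ge 1\}\cup\{q_{a,b}: a,b\ge 1\}\cup\{z\}$. Then for every $k\ge0$, the number of acyclic orientations of $\Sigma$ with exactly $k$ sinks equals the sum of the coefficients of those monomials for which the sum of the indices $n$ of its $\xi_n$ factors (counted with multiplicity) equals $k$.
   Context: A signed graph $\Sigma$ is a finite graph (loops and multiple edges allowed) together with a sign function $\mathrm{sgn}:E(\Sigma)\to\{+,-\}$; write $e:uv$ if $e$ has endpoints $u,v$ ($u=v$ for a loop). A coloring is a map $\kappa:V(\Sigma)\to\mathbb{Z}$; it is proper if $\kappa(u)\neq \mathrm{sgn}(e)\kappa(v)$ for every edge $e:uv$. The chromatic $B$-symmetric function is $X_\Sigma=\sum_{\kappa\text{ proper}}\prod_{v\in V(\Sigma)}x_{\kappa(v)}$, a formal power series in commuting variables $x_i$, $i\in\mathbb{Z}$. An orientation of $\Sigma$ assigns to each incidence of an edge with an endpoint (each half-edge; a loop has two) an arrow pointing toward or away from that vertex, such that on a positive edge exactly one of the two arrows points toward its vertex, and on a negative edge the two arrows either both point toward their vertices or both point away. A cycle is a closed walk such that, considering only the edges of the walk, every vertex of the walk has at least one arrow pointing into it and at least one pointing out of it; an orientation is acyclic if it has no cycle. A sink is a vertex all of whose incident arrows point toward it (an isolated vertex is a sink). Notation: $p_{a,b}=\sum_{i\in\mathbb{Z}}x_i^a x_{-i}^b$; $q_{a,b}=(-1)^{a+b+1}p_{a,b}$; $z=-x_0$; $\xi_n=\sum_{a=1}^n\binom{n}{a}p_{a,0}$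 for $n\ge1$ (equivalently $p_{n,0}=\sum_{i=1}^n\binom{n}{i}(-1)^{n-i}\xi_i$). *)

theory Defs
  imports Complex_Main "HOL-Library.Poly_Mapping" "HOL-Library.FuncSet"
begin

text \<open>A monomial in the variables x_i (i :: int) is a finitely supported exponent
  vector; a formal power series is its coefficient function.\<close>

type_synonym mon = "int \<Rightarrow>\<^sub>0 nat"
type_synonym ser = "mon \<Rightarrow> rat"

definition ser_one :: ser where
  "ser_one m = (if m = 0 then 1 else 0)"

definition ser_mult :: "ser \<Rightarrow> ser \<Rightarrow> ser" where
  "ser_mult f g m = (\<Sum>q \<in> {q. fst q + snd q = m}. f (fst q) * g (snd q))"

definition ser_pow :: "ser \<Rightarrow> nat \<Rightarrow> ser" where
  "ser_pow f n = (ser_mult f ^^ n) ser_one"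

text \<open>p_{a,b} = sum over i in Z of x_i^a x_{-i}^b (coefficientwise).\<close>
definition p_ser :: "nat \<Rightarrow> nat \<Rightarrow> ser" where
  "p_ser a b m = of_nat (card {i::int. Poly_Mapping.single i a + Poly_Mapping.single (-i) b = m})"

datatype gen = Xi nat | Q nat nat | Z

fun valid_gen :: "gen \<Rightarrow> bool" where
  "valid_gen (Xi n) = (1 \<le> n)"
| "valid_gen (Q a b) = (1 \<le> a \<and> 1 \<le> b)"
| "valid_gen Z = True"

fun gen_ser :: "gen \<Rightarrow> ser" where
  "gen_ser (Xi n) = (\<lambda>m. \<Sum>a=1..n. of_nat (n choose a) * p_ser a 0 m)"
| "gen_ser (Q a b) = (\<lambda>m. (-1) ^ (a + b + 1) * p_ser a b m)"
| "gen_ser Z = (\<lambda>m. if m = Poly_Mapping.single 0 1 then -1 else 0)"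

definition ser_monom :: "(gen \<Rightarrow> ser) \<Rightarrow> (gen \<Rightarrow>\<^sub>0 nat) \<Rightarrow> ser" where
  "ser_monom \<sigma> \<mu> =
     Finite_Set.fold (\<lambda>g acc. ser_mult (ser_pow (\<sigma> g) (Poly_Mapping.lookup \<mu> g)) acc) ser_one (Poly_Mapping.keys \<mu>)"

definition poly_eval :: "((gen \<Rightarrow>\<^sub>0 nat) \<Rightarrow>\<^sub>0 rat) \<Rightarrow> ser" where
  "poly_eval P m = (\<Sum>\<mu> \<in> Poly_Mapping.keys P. Poly_Mapping.lookup P \<mu> * ser_monom gen_ser \<mu> m)"

fun xi_index :: "gen \<Rightarrow> nat" where
  "xi_index (Xi n) = n"
| "xi_index (Q a b) = 0"
| "xi_index Z = 0"

definition xi_deg :: "(gen \<Rightarrow>\<^sub>0 nat) \<Rightarrow> nat" where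
  "xi_deg \<mu> = (\<Sum>g \<in> Poly_Mapping.keys \<mu>. xi_index g * Poly_Mapping.lookup \<mu> g)"

text \<open>A signed graph: vertex set V, edge set E, endpoints ends e (unordered; a loop
  has equal endpoints), sign sg e (True = positive).  Half-edges are pairs (e, s),
  s :: bool; (e, True) is at fst (ends e), (e, False) at snd (ends e).\<close>

definition endpoint :: "('e \<Rightarrow> 'v \<times> 'v) \<Rightarrow> 'e \<Rightarrow> bool \<Rightarrow> 'v" where
  "endpoint ends e s = (if s then fst (ends e) else snd (ends e))"

definition proper_coloring ::
  "'v set \<Rightarrow> 'e set \<Rightarrow> ('e \<Rightarrow> 'v \<times> 'v) \<Rightarrow> ('e \<Rightarrow> bool) \<Rightarrow> ('v \<Rightarrow> int) \<Rightarrow> bool" where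
  "proper_coloring V E ends sg \<kappa> \<longleftrightarrow>
     (\<forall>e\<in>E. \<kappa> (fst (ends e)) \<noteq> (if sg e then 1 else -1) * \<kappa> (snd (ends e)))"

definition chromB :: "'v set \<Rightarrow> 'e set \<Rightarrow> ('e \<Rightarrow> 'v \<times> 'v) \<Rightarrow> ('e \<Rightarrow> bool) \<Rightarrow> ser" where
  "chromB V E ends sg m = of_nat (card {\<kappa> \<in> V \<rightarrow>\<^sub>E (UNIV :: int set).
      proper_coloring V E ends sg \<kappa> \<and> (\<forall>i. Poly_Mapping.lookup m i = card {v\<in>V. \<kappa> v = i})})"

text \<open>An orientation: tau (e, s) = True iff the arrow at half-edge (e, s) points toward
  its vertex.\<close>
definition orientations :: "'e set \<Rightarrow> ('e \<Rightarrow> bool) \<Rightarrow> ('e \<times> bool \<Rightarrow> bool) set" where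
  "orientations E sg = {\<tau> \<in> (E \<times> (UNIV :: bool set)) \<rightarrow>\<^sub>E (UNIV :: bool set).
      \<forall>e\<in>E. (\<tau> (e, True) \<noteq> \<tau> (e, False)) = sg e}"

definition has_cycle :: "'e set \<Rightarrow> ('e \<Rightarrow> 'v \<times> 'v) \<Rightarrow> ('e \<times> bool \<Rightarrow> bool) \<Rightarrow> bool" where
  "has_cycle E ends \<tau> \<longleftrightarrow>
     (\<exists>vs es. es \<noteq> [] \<and> length vs = Suc (length es) \<and> hd vs = last vs \<and> set es \<subseteq> E \<and>
        (\<forall>i<length es. {endpoint ends (es!i) True, endpoint ends (es!i) False} = {vs!i, vs!Suc i}) \<and>
        (\<forall>w\<in>set vs.
            (\<exists>e\<in>set es. \<exists>s. endpoint ends e s = w \<and> \<tau> (e, s)) \<and>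
            (\<exists>e\<in>set es. \<exists>s. endpoint ends e s = w \<and> \<not> \<tau> (e, s))))"

definition acyclic_orientation :: "'e set \<Rightarrow> ('e \<Rightarrow> 'v \<times> 'v) \<Rightarrow> ('e \<times> bool \<Rightarrow> bool) \<Rightarrow> bool" where
  "acyclic_orientation E ends \<tau> \<longleftrightarrow> \<not> has_cycle E ends \<tau>"

definition sinks :: "'v set \<Rightarrow> 'e set \<Rightarrow> ('e \<Rightarrow> 'v \<times> 'v) \<Rightarrow> ('e \<times> bool \<Rightarrow> bool) \<Rightarrow> 'v set" where
  "sinks V E ends \<tau> = {v\<in>V. \<forall>e\<in>E. \<forall>s. endpoint ends e s = v \<longrightarrow> \<tau> (e, s)}"

end

theory Submission
  imports Defs "HOL-Computational_Algebra.Polynomial"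
begin


lemma keys_add_nat: "Poly_Mapping.keys (a + b :: 'a \<Rightarrow>\<^sub>0 nat) = Poly_Mapping.keys a \<union> Poly_Mapping.keys b"
  by (auto simp: in_keys_iff lookup_add)

lemma finite_le_mon: "finite {a :: 'a \<Rightarrow>\<^sub>0 nat. \<forall>i. Poly_Mapping.lookup a i \<le> Poly_Mapping.lookup m i}"
proof -
  let ?B = "{0..(\<Sum>i\<in>Poly_Mapping.keys m. Poly_Mapping.lookup m i)}"
  have fin: "finite {f. \<forall>x. (x \<in> Poly_Mapping.keys m \<longrightarrow> f x \<in> ?B) \<and> (x \<notin> Poly_Mapping.keys m \<longrightarrow> f x = 0)}"
    by (rule finite_set_of_finite_funs) auto
  have "Poly_Mapping.lookup ` {a. \<forall>i. Poly_Mapping.lookup a i \<le> Poly_Mapping.lookup m i}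
     \<subseteq> {f. \<forall>x. (x \<in> Poly_Mapping.keys m \<longrightarrow> f x \<in> ?B) \<and> (x \<notin> Poly_Mapping.keys m \<longrightarrow> f x = 0)}"
  proof (clarsimp, intro conjI allI impI)
    fix a x assume le: "\<forall>i. Poly_Mapping.lookup a i \<le> Poly_Mapping.lookup m i"
    assume "x \<in> Poly_Mapping.keys m"
    then have "Poly_Mapping.lookup m x \<le> (\<Sum>i\<in>Poly_Mapping.keys m. Poly_Mapping.lookup m i)"
      by (intro member_le_sum) auto
    then show "Poly_Mapping.lookup a x \<le> (\<Sum>i\<in>Poly_Mapping.keys m. Poly_Mapping.lookup m i)"
      using le[rule_format, of x] by linarith
  next
    fix a x assume le: "\<forall>i. Poly_Mapping.lookup a i \<le> Poly_Mapping.lookup m i"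
    assume "x \<notin> Poly_Mapping.keys m"
    then show "Poly_Mapping.lookup a x = 0" using le[rule_format, of x] by (simp add: in_keys_iff)
  qed
  then have "finite (Poly_Mapping.lookup ` {a. \<forall>i. Poly_Mapping.lookup a i \<le> Poly_Mapping.lookup m i})"
    using fin finite_subset by blast
  moreover have "inj_on Poly_Mapping.lookup X" for X :: "('a \<Rightarrow>\<^sub>0 nat) set"
    by (auto intro: inj_onI poly_mapping_eqI)
  ultimately show ?thesis using finite_imageD by blast
qed

definition dec :: "mon \<Rightarrow> (mon \<times> mon) set" where
  "dec m = {q. fst q + snd q = m}"

lemma finite_dec: "finite (dec m)"
proof -
  have "dec m \<subseteq> (\<lambda>a. (a, m - a)) ` {a. \<forall>i. Poly_Mapping.lookup a i \<le> Poly_Mapping.lookup m i}"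
  proof
    fix q assume "q \<in> dec m"
    then have q: "fst q + snd q = m" by (simp add: dec_def)
    then have "snd q = m - fst q" by (metis add_diff_cancel_left')
    moreover have "\<forall>i. Poly_Mapping.lookup (fst q) i \<le> Poly_Mapping.lookup m i"
    proof
      fix i have "Poly_Mapping.lookup m i = Poly_Mapping.lookup (fst q) i + Poly_Mapping.lookup (snd q) i"
        using q by (metis lookup_add)
      then show "Poly_Mapping.lookup (fst q) i \<le> Poly_Mapping.lookup m i" by simp
    qed
    ultimately show "q \<in> (\<lambda>a. (a, m - a)) ` {a. \<forall>i. Poly_Mapping.lookup a i \<le> Poly_Mapping.lookup m i}"
      by (intro image_eqI[where x="fst q"]) (auto simp: prod_eq_iff)
  qed
  then show ?thesis using finite_le_mon finite_subset by blast
qed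

lemma ser_mult_dec: "ser_mult f g m = (\<Sum>q\<in>dec m. f (fst q) * g (snd q))"
  by (simp add: ser_mult_def dec_def)

lemma ser_mult_comm: "ser_mult f g = ser_mult g f"
proof
  fix m
  show "ser_mult f g m = ser_mult g f m"
    unfolding ser_mult_dec
    by (rule sum.reindex_bij_witness[where i="\<lambda>q. (snd q, fst q)" and j="\<lambda>q. (snd q, fst q)"])
       (auto simp: dec_def add.commute mult.commute)
qed

lemma ser_mult_assoc_aux:
  "ser_mult (ser_mult f g) h m =
     (\<Sum>t\<in>{t. fst t + fst (snd t) + snd (snd t) = m}. f (fst t) * g (fst (snd t)) * h (snd (snd t)))"
proof -
  have "ser_mult (ser_mult f g) h m = (\<Sum>q\<in>dec m. (\<Sum>p\<in>dec (fst q). f (fst p) * g (snd p)) * h (snd q))"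
    by (simp add: ser_mult_dec)
  also have "\<dots> = (\<Sum>q\<in>dec m. \<Sum>p\<in>dec (fst q). f (fst p) * g (snd p) * h (snd q))"
    by (simp add: sum_distrib_right)
  also have "\<dots> = (\<Sum>qp\<in>Sigma (dec m) (\<lambda>q. dec (fst q)). f (fst (snd qp)) * g (snd (snd qp)) * h (snd (fst qp)))"
    by (subst sum.Sigma) (auto simp: finite_dec split_def)
  also have "\<dots> = (\<Sum>t\<in>{t. fst t + fst (snd t) + snd (snd t) = m}. f (fst t) * g (fst (snd t)) * h (snd (snd t)))"
    by (rule sum.reindex_bij_witness[where i="\<lambda>t. ((fst t + fst (snd t), snd (snd t)), (fst t, fst (snd t)))"
          and j="\<lambda>qp. (fst (snd qp), snd (snd qp), snd (fst qp))"])
       (auto simp: dec_def)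
  finally show ?thesis .
qed

lemma ser_mult_assoc: "ser_mult (ser_mult f g) h = ser_mult f (ser_mult g h)"
proof
  fix m
  have "ser_mult f (ser_mult g h) m = ser_mult (ser_mult h g) f m"
    by (simp add: ser_mult_comm)
  also have "\<dots> = (\<Sum>t\<in>{t. fst t + fst (snd t) + snd (snd t) = m}. h (fst t) * g (fst (snd t)) * f (snd (snd t)))"
    by (rule ser_mult_assoc_aux)
  also have "\<dots> = (\<Sum>t\<in>{t. fst t + fst (snd t) + snd (snd t) = m}. f (fst t) * g (fst (snd t)) * h (snd (snd t)))"
    by (rule sum.reindex_bij_witness[where i="\<lambda>t. (snd (snd t), fst (snd t), fst t)"
          and j="\<lambda>t. (snd (snd t), fst (snd t), fst t)"]) (auto simp: ac_simps)
  finally show "ser_mult (ser_mult f g) h m = ser_mult f (ser_mult g h) m"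
    by (simp add: ser_mult_assoc_aux)
qed

lemma ser_mult_one: "ser_mult ser_one f = f"
proof
  fix m
  have "ser_mult ser_one f m = (\<Sum>q\<in>dec m. if q = (0, m) then f m else 0)"
    unfolding ser_mult_dec
    by (rule sum.cong) (auto simp: ser_one_def dec_def)
  also have "\<dots> = f m" by (subst sum.delta) (auto simp: finite_dec, simp add: dec_def)
  finally show "ser_mult ser_one f m = f m" .
qed

lemma ser_mult_left_commute: "ser_mult a (ser_mult b c) = ser_mult b (ser_mult a c)"
  by (metis ser_mult_assoc ser_mult_comm)

lemma comp_fun_commute_ser: "comp_fun_commute (\<lambda>g acc. ser_mult (F g) acc)"
  by unfold_locales (auto simp: fun_eq_iff ser_mult_left_commute)


definition suppC :: "int set \<Rightarrow> ser \<Rightarrow> mon set" where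
  "suppC C F = {m. Poly_Mapping.keys m \<subseteq> C \<and> F m \<noteq> 0}"
definition mval :: "int set \<Rightarrow> (int \<Rightarrow> rat) \<Rightarrow> mon \<Rightarrow> rat" where
  "mval C val m = (\<Prod>i\<in>C. val i ^ Poly_Mapping.lookup m i)"
definition ev :: "int set \<Rightarrow> (int \<Rightarrow> rat) \<Rightarrow> ser \<Rightarrow> rat" where
  "ev C val F = (\<Sum>m\<in>suppC C F. F m * mval C val m)"
definition finC :: "int set \<Rightarrow> ser \<Rightarrow> bool" where
  "finC C F \<longleftrightarrow> finite (suppC C F)"

lemma ev_superset:
  assumes "finite M" "suppC C F \<subseteq> M" "\<forall>m\<in>M. Poly_Mapping.keys m \<subseteq> C"
  shows "ev C val F = (\<Sum>m\<in>M. F m * mval C val m)"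
  unfolding ev_def
  by (rule sum.mono_neutral_left) (use assms in \<open>auto simp: suppC_def\<close>)

lemma mval_add: "finite C \<Longrightarrow> mval C val (a + b) = mval C val a * mval C val b"
  by (simp add: mval_def lookup_add power_add prod.distrib)

lemma mval_zero: "mval C val 0 = 1"
  by (simp add: mval_def)

lemma ev_mult:
  assumes C: "finite C" and F: "finC C F" and G: "finC C G"
  shows "finC C (ser_mult F G) \<and> ev C val (ser_mult F G) = ev C val F * ev C val G"
proof -
  let ?SF = "suppC C F" and ?SG = "suppC C G"
  let ?M = "(\<lambda>q. fst q + snd q) ` (?SF \<times> ?SG)"
  have finM: "finite ?M" using F G by (simp add: finC_def)
  have keysM: "\<forall>m\<in>?M. Poly_Mapping.keys m \<subseteq> C"
    by (auto simp: keys_add_nat suppC_def)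
  have sub: "suppC C (ser_mult F G) \<subseteq> ?M"
  proof
    fix m assume "m \<in> suppC C (ser_mult F G)"
    then have km: "Poly_Mapping.keys m \<subseteq> C" and nz: "(\<Sum>q\<in>dec m. F (fst q) * G (snd q)) \<noteq> 0"
      by (auto simp: suppC_def ser_mult_dec)
    from nz obtain q where q: "q \<in> dec m" "F (fst q) * G (snd q) \<noteq> 0"
      by (meson sum.not_neutral_contains_not_neutral)
    then have "fst q \<in> ?SF" "snd q \<in> ?SG" "m = fst q + snd q"
      using km by (auto simp: suppC_def dec_def keys_add_nat)
    then show "m \<in> ?M" by (intro image_eqI[where x=q]) (auto simp: mem_Times_iff)
  qed
  then have fin: "finC C (ser_mult F G)" unfolding finC_def by (rule finite_subset[OF _ finM])
  have "ev C val (ser_mult F G) = (\<Sum>m\<in>?M. ser_mult F G m * mval C val m)"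
    by (rule ev_superset[OF finM sub keysM])
  also have "\<dots> = (\<Sum>m\<in>?M. \<Sum>q\<in>dec m. F (fst q) * G (snd q) * mval C val m)"
    by (simp add: ser_mult_dec sum_distrib_right)
  also have "\<dots> = (\<Sum>m\<in>?M. \<Sum>q\<in>{q\<in>?SF \<times> ?SG. fst q + snd q = m}.
                     (F (fst q) * mval C val (fst q)) * (G (snd q) * mval C val (snd q)))"
  proof (rule sum.cong[OF refl])
    fix m assume mM: "m \<in> ?M"
    show "(\<Sum>q\<in>dec m. F (fst q) * G (snd q) * mval C val m) =
          (\<Sum>q\<in>{q\<in>?SF \<times> ?SG. fst q + snd q = m}.
                     (F (fst q) * mval C val (fst q)) * (G (snd q) * mval C val (snd q)))"
    proof (rule sum.mono_neutral_cong_right)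
      show "finite (dec m)" by (rule finite_dec)
      show "{q\<in>?SF \<times> ?SG. fst q + snd q = m} \<subseteq> dec m" by (auto simp: dec_def)
      show "\<forall>q\<in>dec m - {q\<in>?SF \<times> ?SG. fst q + snd q = m}. F (fst q) * G (snd q) * mval C val m = 0"
      proof
        fix q assume q: "q \<in> dec m - {q\<in>?SF \<times> ?SG. fst q + snd q = m}"
        have kmC: "Poly_Mapping.keys m \<subseteq> C" using mM keysM by blast
        have qm: "fst q + snd q = m" using q by (simp add: dec_def)
        then have "Poly_Mapping.keys (fst q) \<subseteq> C" "Poly_Mapping.keys (snd q) \<subseteq> C"
          using kmC keys_add_nat[of "fst q" "snd q"] by auto
        moreover have "fst q \<notin> ?SF \<or> snd q \<notin> ?SG" using q qm by (auto simp: mem_Times_iff)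
        ultimately have "F (fst q) = 0 \<or> G (snd q) = 0" by (auto simp: suppC_def)
        then show "F (fst q) * G (snd q) * mval C val m = 0" by auto
      qed
      show "\<And>q. q \<in> {q\<in>?SF \<times> ?SG. fst q + snd q = m} \<Longrightarrow>
            F (fst q) * G (snd q) * mval C val m =
            (F (fst q) * mval C val (fst q)) * (G (snd q) * mval C val (snd q))"
        by (auto simp: mval_add[OF C])
    qed
  qed
  also have "\<dots> = (\<Sum>q\<in>?SF \<times> ?SG. (F (fst q) * mval C val (fst q)) * (G (snd q) * mval C val (snd q)))"
    by (rule sum.group) (use F G finM in \<open>auto simp: finC_def\<close>)
  also have "\<dots> = ev C val F * ev C val G"
    by (simp add: ev_def sum_product sum.cartesian_product split_def)
  finally show ?thesis using fin by simp
qed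

lemma ev_one: "finC C ser_one \<and> ev C val ser_one = 1"
proof -
  have s: "suppC C ser_one = {0}" by (auto simp: suppC_def ser_one_def)
  show ?thesis by (simp add: finC_def ev_def s ser_one_def mval_zero)
qed

lemma ev_pow:
  assumes C: "finite C" and F: "finC C F"
  shows "finC C (ser_pow F n) \<and> ev C val (ser_pow F n) = ev C val F ^ n"
proof (induction n)
  case 0 then show ?case by (simp add: ser_pow_def ev_one)
next
  case (Suc n)
  have e: "ser_pow F (Suc n) = ser_mult F (ser_pow F n)" by (simp add: ser_pow_def)
  have m: "finC C (ser_mult F (ser_pow F n)) \<and> ev C val (ser_mult F (ser_pow F n)) = ev C val F * ev C val (ser_pow F n)"
    by (rule ev_mult[OF C F conjunct1[OF Suc]])
  show ?case unfolding e using m Suc by (simp only: power_Suc)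
qed

lemma ev_fold:
  assumes C: "finite C" and A: "finite A" and fin: "\<forall>g\<in>A. finC C (\<sigma> g)"
  shows "finC C (Finite_Set.fold (\<lambda>g acc. ser_mult (ser_pow (\<sigma> g) (Poly_Mapping.lookup \<mu> g)) acc) ser_one A)
     \<and> ev C val (Finite_Set.fold (\<lambda>g acc. ser_mult (ser_pow (\<sigma> g) (Poly_Mapping.lookup \<mu> g)) acc) ser_one A)
       = (\<Prod>g\<in>A. ev C val (\<sigma> g) ^ Poly_Mapping.lookup \<mu> g)"
  using A fin
proof (induction A rule: finite_induct)
  case empty then show ?case by (simp add: ev_one)
next
  case (insert x F)
  interpret cf: comp_fun_commute "\<lambda>g acc. ser_mult (ser_pow (\<sigma> g) (Poly_Mapping.lookup \<mu> g)) acc"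
    by (rule comp_fun_commute_ser)
  have p: "finC C (ser_pow (\<sigma> x) (Poly_Mapping.lookup \<mu> x)) \<and>
           ev C val (ser_pow (\<sigma> x) (Poly_Mapping.lookup \<mu> x)) = ev C val (\<sigma> x) ^ Poly_Mapping.lookup \<mu> x"
    using ev_pow[OF C] insert.prems by simp
  have IH: "finC C (Finite_Set.fold (\<lambda>g acc. ser_mult (ser_pow (\<sigma> g) (Poly_Mapping.lookup \<mu> g)) acc) ser_one F)
     \<and> ev C val (Finite_Set.fold (\<lambda>g acc. ser_mult (ser_pow (\<sigma> g) (Poly_Mapping.lookup \<mu> g)) acc) ser_one F)
       = (\<Prod>g\<in>F. ev C val (\<sigma> g) ^ Poly_Mapping.lookup \<mu> g)"
    by (rule insert.IH) (use insert.prems in simp)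
  have fi: "Finite_Set.fold (\<lambda>g acc. ser_mult (ser_pow (\<sigma> g) (Poly_Mapping.lookup \<mu> g)) acc) ser_one (insert x F)
    = ser_mult (ser_pow (\<sigma> x) (Poly_Mapping.lookup \<mu> x))
        (Finite_Set.fold (\<lambda>g acc. ser_mult (ser_pow (\<sigma> g) (Poly_Mapping.lookup \<mu> g)) acc) ser_one F)"
    by (rule cf.fold_insert[OF insert.hyps])
  have pr: "(\<Prod>g\<in>insert x F. ev C val (\<sigma> g) ^ Poly_Mapping.lookup \<mu> g)
     = ev C val (\<sigma> x) ^ Poly_Mapping.lookup \<mu> x * (\<Prod>g\<in>F. ev C val (\<sigma> g) ^ Poly_Mapping.lookup \<mu> g)"
    by (rule prod.insert[OF insert.hyps])
  show ?case
    unfolding fi pr using ev_mult[OF C conjunct1[OF p] conjunct1[OF IH], of val] p IH by (simp only:)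
qed

lemma ev_lincomb:
  assumes C: "finite C" and K: "finite K" and fin: "\<forall>x\<in>K. finC C (F x)"
  shows "finC C (\<lambda>m. \<Sum>x\<in>K. c x * F x m) \<and> ev C val (\<lambda>m. \<Sum>x\<in>K. c x * F x m) = (\<Sum>x\<in>K. c x * ev C val (F x))"
proof -
  let ?M = "\<Union>x\<in>K. suppC C (F x)"
  have finM: "finite ?M" using K fin by (auto simp: finC_def)
  have keysM: "\<forall>m\<in>?M. Poly_Mapping.keys m \<subseteq> C" by (auto simp: suppC_def)
  have sub: "suppC C (\<lambda>m. \<Sum>x\<in>K. c x * F x m) \<subseteq> ?M"
  proof
    fix m assume "m \<in> suppC C (\<lambda>m. \<Sum>x\<in>K. c x * F x m)"
    then have "Poly_Mapping.keys m \<subseteq> C" "(\<Sum>x\<in>K. c x * F x m) \<noteq> 0" by (auto simp: suppC_def)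
    then obtain x where "x \<in> K" "c x * F x m \<noteq> 0" by (meson sum.not_neutral_contains_not_neutral)
    then show "m \<in> ?M" using \<open>Poly_Mapping.keys m \<subseteq> C\<close> by (auto simp: suppC_def)
  qed
  have "ev C val (\<lambda>m. \<Sum>x\<in>K. c x * F x m) = (\<Sum>m\<in>?M. (\<Sum>x\<in>K. c x * F x m) * mval C val m)"
    by (rule ev_superset[OF finM sub keysM])
  also have "\<dots> = (\<Sum>x\<in>K. c x * (\<Sum>m\<in>?M. F x m * mval C val m))"
  proof -
    have "(\<Sum>m\<in>?M. (\<Sum>x\<in>K. c x * F x m) * mval C val m) = (\<Sum>m\<in>?M. \<Sum>x\<in>K. c x * (F x m * mval C val m))"
      by (simp add: sum_distrib_right mult.assoc)
    also have "\<dots> = (\<Sum>x\<in>K. \<Sum>m\<in>?M. c x * (F x m * mval C val m))"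
      by (rule sum.swap)
    also have "\<dots> = (\<Sum>x\<in>K. c x * (\<Sum>m\<in>?M. F x m * mval C val m))"
      by (simp add: sum_distrib_left)
    finally show ?thesis .
  qed
  also have "\<dots> = (\<Sum>x\<in>K. c x * ev C val (F x))"
  proof (rule sum.cong[OF refl])
    fix x assume "x \<in> K"
    then have "suppC C (F x) \<subseteq> ?M" by blast
    then show "c x * (\<Sum>m\<in>?M. F x m * mval C val m) = c x * ev C val (F x)"
      using ev_superset[OF finM _ keysM] by metis
  qed
  finally have "ev C val (\<lambda>m. \<Sum>x\<in>K. c x * F x m) = (\<Sum>x\<in>K. c x * ev C val (F x))" .
  moreover have "finC C (\<lambda>m. \<Sum>x\<in>K. c x * F x m)"
    unfolding finC_def by (rule finite_subset[OF sub finM])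
  ultimately show ?thesis by blast
qed


lemma prod_pow_single:
  assumes "finite C"
  shows "(\<Prod>j\<in>C. f j ^ Poly_Mapping.lookup (Poly_Mapping.single k v) j) = (if k \<in> C then f k ^ v else 1)"
proof -
  have "(\<Prod>j\<in>C. f j ^ Poly_Mapping.lookup (Poly_Mapping.single k v) j) = (\<Prod>j\<in>C. if k = j then f k ^ v else 1)"
    by (rule prod.cong) (auto simp: lookup_single when_def)
  also have "\<dots> = (if k \<in> C then f k ^ v else 1)" using assms by (simp add: prod.delta)
  finally show ?thesis .
qed

lemma mval_pq:
  assumes C: "finite C" and i: "i \<in> C" and b: "0 < b \<longrightarrow> -i \<in> C"
  shows "mval C val (Poly_Mapping.single i a + Poly_Mapping.single (-i) b) = val i ^ a * val (-i) ^ b"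
proof -
  have "mval C val (Poly_Mapping.single i a + Poly_Mapping.single (-i) b) =
     mval C val (Poly_Mapping.single i a) * mval C val (Poly_Mapping.single (-i) b)"
    by (rule mval_add[OF C])
  moreover have "mval C val (Poly_Mapping.single i a) = val i ^ a"
    unfolding mval_def using prod_pow_single[OF C, of val i a] i by simp
  moreover have "mval C val (Poly_Mapping.single (-i) b) = val (-i) ^ b"
  proof (cases "b = 0")
    case True then show ?thesis by (simp add: mval_def)
  next
    case False then show ?thesis unfolding mval_def using prod_pow_single[OF C, of val "-i" b] b by simp
  qed
  ultimately show ?thesis by simp
qed

lemma ev_p:
  assumes C: "finite C" and a: "1 \<le> a"
  shows "finC C (p_ser a b) \<and> ev C val (p_ser a b) = (\<Sum>i\<in>{i\<in>C. 0 < b \<longrightarrow> -i \<in> C}. val i ^ a * val (-i) ^ b)"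
proof -
  define \<phi> where "\<phi> i = Poly_Mapping.single i a + Poly_Mapping.single (-i) b" for i :: int
  define I where "I = {i\<in>C. 0 < b \<longrightarrow> -i \<in> C}"
  have finI: "finite I" using C by (simp add: I_def)
  have keys\<phi>: "Poly_Mapping.keys (\<phi> i) = {i} \<union> (if b = 0 then {} else {-i})" for i
    using a by (simp add: \<phi>_def keys_add_nat)
  have kC: "Poly_Mapping.keys (\<phi> i) \<subseteq> C \<longleftrightarrow> i \<in> I" for i
    by (auto simp: keys\<phi> I_def)
  have sub: "suppC C (p_ser a b) \<subseteq> \<phi> ` I"
  proof
    fix m assume "m \<in> suppC C (p_ser a b)"
    then have km: "Poly_Mapping.keys m \<subseteq> C" and nz: "card {i. \<phi> i = m} \<noteq> 0"
      by (auto simp: suppC_def p_ser_def \<phi>_def)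
    then obtain i where "\<phi> i = m" by (metis (mono_tags, lifting) card.empty empty_Collect_eq)
    then show "m \<in> \<phi> ` I" using km kC by blast
  qed
  have finM: "finite (\<phi> ` I)" using finI by simp
  have keysM: "\<forall>m\<in>\<phi> ` I. Poly_Mapping.keys m \<subseteq> C" using kC by blast
  have "ev C val (p_ser a b) = (\<Sum>m\<in>\<phi> ` I. p_ser a b m * mval C val m)"
    by (rule ev_superset[OF finM sub keysM])
  also have "\<dots> = (\<Sum>m\<in>\<phi> ` I. \<Sum>i\<in>{i\<in>I. \<phi> i = m}. mval C val (\<phi> i))"
  proof (rule sum.cong[OF refl])
    fix m assume m: "m \<in> \<phi> ` I"
    have eq: "{i. \<phi> i = m} = {i\<in>I. \<phi> i = m}"
    proof (intro set_eqI iffI)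
      fix i assume i: "i \<in> {i. \<phi> i = m}"
      obtain x where "x \<in> I" "m = \<phi> x" using m by blast
      then have "Poly_Mapping.keys (\<phi> i) \<subseteq> C" using i kC by simp
      then show "i \<in> {i\<in>I. \<phi> i = m}" using i kC by simp
    qed simp
    have "p_ser a b m = of_nat (card {i\<in>I. \<phi> i = m})"
      unfolding p_ser_def \<phi>_def[symmetric] eq[symmetric] ..
    then show "p_ser a b m * mval C val m = (\<Sum>i\<in>{i\<in>I. \<phi> i = m}. mval C val (\<phi> i))"
      by simp
  qed
  also have "\<dots> = (\<Sum>i\<in>I. mval C val (\<phi> i))"
    by (rule sum.group) (use finI in auto)
  also have "\<dots> = (\<Sum>i\<in>I. val i ^ a * val (-i) ^ b)"
    by (rule sum.cong[OF refl]) (auto simp: \<phi>_def I_def intro!: mval_pq[OF C])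
  moreover have "finC C (p_ser a b)" unfolding finC_def by (rule finite_subset[OF sub finM])
  ultimately show ?thesis unfolding I_def by simp
qed

lemma ev_scale:
  assumes "finC C F"
  shows "finC C (\<lambda>m. c * F m) \<and> ev C val (\<lambda>m. c * F m) = c * ev C val F"
proof -
  have sub: "suppC C (\<lambda>m. c * F m) \<subseteq> suppC C F" by (auto simp: suppC_def)
  have fin: "finite (suppC C F)" using assms by (simp add: finC_def)
  have "ev C val (\<lambda>m. c * F m) = (\<Sum>m\<in>suppC C F. c * F m * mval C val m)"
    by (rule ev_superset[OF fin sub]) (auto simp: suppC_def)
  also have "\<dots> = c * ev C val F" by (simp add: ev_def sum_distrib_left mult.assoc)
  moreover have "finC C (\<lambda>m. c * F m)" unfolding finC_def by (rule finite_subset[OF sub fin])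
  ultimately show ?thesis by simp
qed

definition Cn :: "nat \<Rightarrow> int set" where
  "Cn n = {0, 1} \<union> {j. 2 \<le> \<bar>j\<bar> \<and> \<bar>j\<bar> \<le> int n + 1}"
definition Nn :: "nat \<Rightarrow> int set" where
  "Nn n = {j. 2 \<le> \<bar>j\<bar> \<and> \<bar>j\<bar> \<le> int n + 1}"
definition vt :: "rat \<Rightarrow> int \<Rightarrow> rat" where
  "vt t j = (if j = 1 then t - 1 else -1)"

lemma Nn_eq: "Nn n = {-(int n + 1)..-2} \<union> {2..int n + 1}"
  by (auto simp: Nn_def)

lemma card_Nn: "card (Nn n) = 2 * n" and finite_Nn: "finite (Nn n)"
proof -
  have "card ({-(int n + 1)..-2} \<union> {2..int n + 1}) = card {-(int n + 1)..-2} + card {2..int n + 1}"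
    by (rule card_Un_disjoint) auto
  then show "card (Nn n) = 2 * n" by (simp add: Nn_eq)
  show "finite (Nn n)" by (simp add: Nn_eq)
qed

lemma Cn_eq: "Cn n = insert 1 (insert 0 (Nn n))"
  by (auto simp: Cn_def Nn_def)

lemma finite_Cn: "finite (Cn n)" by (simp add: Cn_eq finite_Nn)

lemma zero_notin_Nn: "0 \<notin> Nn n" and one_notin_Nn: "1 \<notin> Nn n" and neg_Nn: "-i \<in> Nn n \<longleftrightarrow> i \<in> Nn n"
  by (auto simp: Nn_def)

lemma ev_p0:
  assumes a: "1 \<le> a"
  shows "finC (Cn n) (p_ser a 0) \<and> ev (Cn n) (vt t) (p_ser a 0) = (t - 1) ^ a + (2 * of_nat n + 1) * (-1) ^ a"
proof -
  have nn: "(\<Sum>i\<in>Nn n. vt t i ^ a) = 2 * of_nat n * (-1) ^ a"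
  proof -
    have "(\<Sum>i\<in>Nn n. vt t i ^ a) = (\<Sum>i\<in>Nn n. (-1) ^ a)"
      by (rule sum.cong) (auto simp: vt_def Nn_def)
    then show ?thesis by (simp add: card_Nn)
  qed
  have c: "(\<Sum>i\<in>Cn n. vt t i ^ a) = vt t 1 ^ a + (vt t 0 ^ a + (\<Sum>i\<in>Nn n. vt t i ^ a))"
    unfolding Cn_eq using finite_Nn zero_notin_Nn one_notin_Nn by simp
  have "(\<Sum>i\<in>{i\<in>Cn n. 0 < (0::nat) \<longrightarrow> -i \<in> Cn n}. vt t i ^ a * vt t (-i) ^ 0) = (\<Sum>i\<in>Cn n. vt t i ^ a)"
    by simp
  also have "\<dots> = (t - 1) ^ a + (2 * of_nat n + 1) * (-1) ^ a"
    unfolding c nn by (simp add: vt_def algebra_simps)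
  finally show ?thesis using ev_p[OF finite_Cn a, where b=0 and val="vt t"] by simp
qed

lemma ev_pab:
  assumes a: "1 \<le> a" and b: "1 \<le> b"
  shows "finC (Cn n) (p_ser a b) \<and> ev (Cn n) (vt t) (p_ser a b) = (2 * of_nat n + 1) * (-1) ^ (a + b)"
proof -
  have I: "{i\<in>Cn n. 0 < b \<longrightarrow> -i \<in> Cn n} = insert 0 (Nn n)"
    using b by (auto simp: Cn_eq neg_Nn Nn_def)
  have "(\<Sum>i\<in>{i\<in>Cn n. 0 < b \<longrightarrow> -i \<in> Cn n}. vt t i ^ a * vt t (-i) ^ b) = (\<Sum>i\<in>insert 0 (Nn n). (-1) ^ (a + b))"
    unfolding I by (rule sum.cong[OF refl]) (auto simp: vt_def Nn_def power_add)
  also have "\<dots> = (2 * of_nat n + 1) * (-1) ^ (a + b)"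
    using finite_Nn zero_notin_Nn by (simp add: card_Nn algebra_simps)
  finally show ?thesis using ev_p[OF finite_Cn a, where b=b and val="vt t"] by simp
qed

lemma binom_sum: "(\<Sum>a\<le>j. of_nat (j choose a) * x ^ a) = (x + 1) ^ j" for x :: rat
  using binomial_ring[of x 1 j] by simp

fun egen :: "rat \<Rightarrow> gen \<Rightarrow> rat \<Rightarrow> rat" where
  "egen t (Xi j) x = t ^ j - 2 * x - 2"
| "egen t (Q a b) x = - (2 * x + 1)"
| "egen t Z x = 1"

lemma ev_gen:
  assumes "valid_gen g"
  shows "finC (Cn n) (gen_ser g) \<and> ev (Cn n) (vt t) (gen_ser g) = egen t g (of_nat n)"
proof (cases g)
  case (Xi j)
  then have j: "1 \<le> j" using assms by simp
  have e: "gen_ser g = (\<lambda>m. \<Sum>a\<in>{1..j}. of_nat (j choose a) * p_ser a 0 m)" by (simp add: Xi)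
  have fin: "\<forall>a\<in>{1..j}. finC (Cn n) (p_ser a 0)" using ev_p0 by auto
  have L: "finC (Cn n) (gen_ser g) \<and> ev (Cn n) (vt t) (gen_ser g) =
      (\<Sum>a\<in>{1..j}. of_nat (j choose a) * ev (Cn n) (vt t) (p_ser a 0))"
    unfolding e by (rule ev_lincomb[OF finite_Cn _ fin]) simp
  have "(\<Sum>a\<in>{1..j}. of_nat (j choose a) * ev (Cn n) (vt t) (p_ser a 0))
      = (\<Sum>a\<in>{1..j}. of_nat (j choose a) * ((t - 1) ^ a + (2 * of_nat n + 1) * (-1) ^ a))"
    by (rule sum.cong[OF refl]) (simp add: ev_p0)
  also have "\<dots> = (\<Sum>a\<le>j. of_nat (j choose a) * ((t - 1) ^ a + (2 * of_nat n + 1) * (-1) ^ a)) - (2 * of_nat n + 2)"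
  proof -
    have "{..j} = insert 0 {1..j}" by auto
    then show ?thesis by simp
  qed
  also have "\<dots> = (\<Sum>a\<le>j. of_nat (j choose a) * (t - 1) ^ a) + (2 * of_nat n + 1) * (\<Sum>a\<le>j. of_nat (j choose a) * (-1) ^ a) - (2 * of_nat n + 2)"
    by (simp add: sum.distrib sum_distrib_left algebra_simps)
  also have "\<dots> = ((t - 1) + 1) ^ j + (2 * of_nat n + 1) * ((-1) + 1) ^ j - (2 * of_nat n + 2)"
    using binom_sum[of j "t - 1"] binom_sum[of j "-1"] by simp
  also have "\<dots> = t ^ j - 2 * of_nat n - 2" using j by simp
  finally show ?thesis using L Xi by simp
next
  case (Q a b)
  then have ab: "1 \<le> a" "1 \<le> b" using assms by auto
  have e: "gen_ser g = (\<lambda>m. (-1) ^ (a + b + 1) * p_ser a b m)" by (simp add: Q)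
  show ?thesis unfolding e using ev_scale[OF conjunct1[OF ev_pab[OF ab]], where c="(-1) ^ (a + b + 1)" and val="vt t"]
      ev_pab[OF ab, of n t] Q
    by (simp add: power_add algebra_simps)
next
  case Z
  have s: "suppC (Cn n) (gen_ser Z) = {Poly_Mapping.single 0 1}"
    by (auto simp: suppC_def Cn_def)
  have mv: "mval (Cn n) (vt t) (Poly_Mapping.single 0 1) = -1"
    unfolding mval_def by (subst prod_pow_single[OF finite_Cn]) (simp add: Cn_def vt_def)
  show ?thesis unfolding Z finC_def ev_def s using mv by simp
qed

lemma ev_poly_eval:
  assumes valid: "\<forall>\<mu>\<in>Poly_Mapping.keys P. \<forall>g\<in>Poly_Mapping.keys \<mu>. valid_gen g"
  shows "ev (Cn n) (vt t) (poly_eval P) =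
    (\<Sum>\<mu>\<in>Poly_Mapping.keys P. Poly_Mapping.lookup P \<mu> * (\<Prod>g\<in>Poly_Mapping.keys \<mu>. egen t g (of_nat n) ^ Poly_Mapping.lookup \<mu> g))"
proof -
  have mon: "finC (Cn n) (ser_monom gen_ser \<mu>) \<and> ev (Cn n) (vt t) (ser_monom gen_ser \<mu>) =
      (\<Prod>g\<in>Poly_Mapping.keys \<mu>. egen t g (of_nat n) ^ Poly_Mapping.lookup \<mu> g)"
    if "\<mu> \<in> Poly_Mapping.keys P" for \<mu>
  proof -
    have fin: "\<forall>g\<in>Poly_Mapping.keys \<mu>. finC (Cn n) (gen_ser g)" using valid that ev_gen by blast
    have "(\<Prod>g\<in>Poly_Mapping.keys \<mu>. ev (Cn n) (vt t) (gen_ser g) ^ Poly_Mapping.lookup \<mu> g)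
        = (\<Prod>g\<in>Poly_Mapping.keys \<mu>. egen t g (of_nat n) ^ Poly_Mapping.lookup \<mu> g)"
    proof (rule prod.cong[OF refl])
      fix g assume "g \<in> Poly_Mapping.keys \<mu>"
      then have "valid_gen g" using valid that by blast
      then show "ev (Cn n) (vt t) (gen_ser g) ^ Poly_Mapping.lookup \<mu> g = egen t g (of_nat n) ^ Poly_Mapping.lookup \<mu> g"
        using ev_gen by simp
    qed
    then show ?thesis
      using ev_fold[OF finite_Cn finite_keys fin, of \<mu> "vt t"] unfolding ser_monom_def by simp
  qed
  have e: "poly_eval P = (\<lambda>m. \<Sum>\<mu>\<in>Poly_Mapping.keys P. Poly_Mapping.lookup P \<mu> * ser_monom gen_ser \<mu> m)"
    by (simp add: poly_eval_def fun_eq_iff)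
  have "ev (Cn n) (vt t) (poly_eval P) = (\<Sum>\<mu>\<in>Poly_Mapping.keys P. Poly_Mapping.lookup P \<mu> * ev (Cn n) (vt t) (ser_monom gen_ser \<mu>))"
    unfolding e by (rule conjunct2[OF ev_lincomb[OF finite_Cn finite_keys]]) (use mon in blast)
  also have "\<dots> = (\<Sum>\<mu>\<in>Poly_Mapping.keys P. Poly_Mapping.lookup P \<mu> * (\<Prod>g\<in>Poly_Mapping.keys \<mu>. egen t g (of_nat n) ^ Poly_Mapping.lookup \<mu> g))"
    by (rule sum.cong[OF refl]) (use mon in simp)
  finally show ?thesis .
qed


lemma ev_chromB:
  fixes V :: "'v set" and E :: "'e set"
  assumes finV: "finite V"
  shows "ev (Cn n) (vt t) (chromB V E ends sg) =
    (\<Sum>\<kappa>\<in>{\<kappa>\<in>V \<rightarrow>\<^sub>E Cn n. proper_coloring V E ends sg \<kappa>}. \<Prod>v\<in>V. vt t (\<kappa> v))"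
proof -
  define C where "C = Cn n"
  have finC': "finite C" by (simp add: C_def finite_Cn)
  define K where "K = {\<kappa>\<in>V \<rightarrow>\<^sub>E C. proper_coloring V E ends sg \<kappa>}"
  have finK: "finite K" unfolding K_def using finV finC' by (intro finite_subset[OF _ finite_PiE[OF finV, of "\<lambda>_. C"]]) auto
  define cont :: "('v \<Rightarrow> int) \<Rightarrow> mon" where "cont \<kappa> = Abs_poly_mapping (\<lambda>i. card {v\<in>V. \<kappa> v = i})" for \<kappa>
  have lk: "Poly_Mapping.lookup (cont \<kappa>) i = card {v\<in>V. \<kappa> v = i}" for \<kappa> i
  proof -
    have "{i. card {v\<in>V. \<kappa> v = i} \<noteq> 0} \<subseteq> \<kappa> ` V"
      by (auto simp: card_eq_0_iff finV)
    then have "finite {i. card {v\<in>V. \<kappa> v = i} \<noteq> 0}" using finV finite_subset by blast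
    then show ?thesis by (simp add: cont_def)
  qed
  have keys_cont: "Poly_Mapping.keys (cont \<kappa>) = \<kappa> ` V" for \<kappa>
    by (auto simp: in_keys_iff lk card_eq_0_iff finV)
  have cont_iff: "(\<forall>i. Poly_Mapping.lookup m i = card {v\<in>V. \<kappa> v = i}) \<longleftrightarrow> cont \<kappa> = m" for m \<kappa>
    by (auto simp: poly_mapping_eq_iff lk fun_eq_iff)
  have chrom: "chromB V E ends sg m = of_nat (card {\<kappa>\<in>V \<rightarrow>\<^sub>E UNIV. proper_coloring V E ends sg \<kappa> \<and> cont \<kappa> = m})" for m
    unfolding chromB_def cont_iff ..
  have sub: "suppC C (chromB V E ends sg) \<subseteq> cont ` K"
  proof
    fix m assume "m \<in> suppC C (chromB V E ends sg)"
    then have km: "Poly_Mapping.keys m \<subseteq> C" and nz: "card {\<kappa>\<in>V \<rightarrow>\<^sub>E UNIV. proper_coloring V E ends sg \<kappa> \<and> cont \<kappa> = m} \<noteq> 0"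
      by (auto simp: suppC_def chrom)
    then obtain \<kappa> where k: "\<kappa> \<in> V \<rightarrow>\<^sub>E UNIV" "proper_coloring V E ends sg \<kappa>" "cont \<kappa> = m"
      by (metis (mono_tags, lifting) card.empty empty_Collect_eq)
    then have "\<kappa> ` V \<subseteq> C" using km keys_cont by blast
    then have "\<kappa> \<in> K" using k by (auto simp: K_def PiE_def Pi_def)
    then show "m \<in> cont ` K" using k by blast
  qed
  have finM: "finite (cont ` K)" using finK by simp
  have keysM: "\<forall>m\<in>cont ` K. Poly_Mapping.keys m \<subseteq> C"
    using keys_cont by (auto simp: K_def PiE_def Pi_def)
  have "ev C (vt t) (chromB V E ends sg) = (\<Sum>m\<in>cont ` K. chromB V E ends sg m * mval C (vt t) m)"
    by (rule ev_superset[OF finM sub keysM])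
  also have "\<dots> = (\<Sum>m\<in>cont ` K. \<Sum>\<kappa>\<in>{\<kappa>\<in>K. cont \<kappa> = m}. mval C (vt t) (cont \<kappa>))"
  proof (rule sum.cong[OF refl])
    fix m assume m: "m \<in> cont ` K"
    have eq: "{\<kappa>\<in>V \<rightarrow>\<^sub>E UNIV. proper_coloring V E ends sg \<kappa> \<and> cont \<kappa> = m} = {\<kappa>\<in>K. cont \<kappa> = m}"
    proof (intro set_eqI iffI)
      fix \<kappa> assume k: "\<kappa> \<in> {\<kappa>\<in>V \<rightarrow>\<^sub>E UNIV. proper_coloring V E ends sg \<kappa> \<and> cont \<kappa> = m}"
      then have "\<kappa> ` V \<subseteq> C" using m keysM keys_cont by blast
      then show "\<kappa> \<in> {\<kappa>\<in>K. cont \<kappa> = m}" using k by (auto simp: K_def PiE_def Pi_def)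
    next
      fix \<kappa> assume "\<kappa> \<in> {\<kappa>\<in>K. cont \<kappa> = m}"
      then show "\<kappa> \<in> {\<kappa>\<in>V \<rightarrow>\<^sub>E UNIV. proper_coloring V E ends sg \<kappa> \<and> cont \<kappa> = m}"
        by (auto simp: K_def PiE_def Pi_def)
    qed
    show "chromB V E ends sg m * mval C (vt t) m = (\<Sum>\<kappa>\<in>{\<kappa>\<in>K. cont \<kappa> = m}. mval C (vt t) (cont \<kappa>))"
      unfolding chrom eq by simp
  qed
  also have "\<dots> = (\<Sum>\<kappa>\<in>K. mval C (vt t) (cont \<kappa>))"
    by (rule sum.group) (use finK in auto)
  also have "\<dots> = (\<Sum>\<kappa>\<in>K. \<Prod>v\<in>V. vt t (\<kappa> v))"
  proof (rule sum.cong[OF refl])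
    fix \<kappa> assume "\<kappa> \<in> K"
    then have kC: "\<kappa> ` V \<subseteq> C" by (auto simp: K_def PiE_def Pi_def)
    have "(\<Prod>v\<in>V. vt t (\<kappa> v)) = (\<Prod>i\<in>C. \<Prod>v\<in>{v\<in>V. \<kappa> v = i}. vt t (\<kappa> v))"
      by (rule prod.group[symmetric]) (use finV finC' kC in auto)
    also have "\<dots> = (\<Prod>i\<in>C. vt t i ^ card {v\<in>V. \<kappa> v = i})"
      by (rule prod.cong[OF refl]) simp
    finally show "mval C (vt t) (cont \<kappa>) = (\<Prod>v\<in>V. vt t (\<kappa> v))"
      by (simp add: mval_def lk)
  qed
  finally show ?thesis by (simp add: C_def K_def)
qed


locale sgraph =
  fixes V :: "'v set" and E :: "'e set" and ends :: "'e \<Rightarrow> 'v \<times> 'v" and sg :: "'e \<Rightarrow> bool"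
  assumes finV: "finite V" and finE: "finite E"
    and ends_in: "\<forall>e\<in>E. fst (ends e) \<in> V \<and> snd (ends e) \<in> V"
begin

definition EY :: "'v set \<Rightarrow> 'e set" where
  "EY Y = {e\<in>E. fst (ends e) \<in> Y \<and> snd (ends e) \<in> Y}"
definition compat :: "'v set \<Rightarrow> 'v set \<Rightarrow> bool" where
  "compat T U \<longleftrightarrow> (\<forall>e\<in>E. fst (ends e) \<in> T \<union> U \<and> snd (ends e) \<in> T \<union> U \<longrightarrow>
      (sg e \<longleftrightarrow> ((fst (ends e) \<in> T) \<noteq> (snd (ends e) \<in> T))))"
definition CP :: "'v set \<Rightarrow> ('v set \<times> 'v set) set" where
  "CP Y = {p. fst p \<subseteq> Y \<and> snd p \<subseteq> Y \<and> fst p \<inter> snd p = {} \<and> compat (fst p) (snd p)}"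
definition CP' :: "'v set \<Rightarrow> ('v set \<times> 'v set) set" where
  "CP' Y = CP Y - {({}, {})}"
definition Dn :: "nat \<Rightarrow> int set" where
  "Dn n = insert 0 (Nn n)"
definition cols :: "'v set \<Rightarrow> nat \<Rightarrow> ('v \<Rightarrow> int) set" where
  "cols Y n = {\<kappa> \<in> Y \<rightarrow>\<^sub>E Dn n. proper_coloring Y (EY Y) ends sg \<kappa>}"
definition cnt :: "'v set \<Rightarrow> nat \<Rightarrow> nat" where
  "cnt Y n = card (cols Y n)"

lemma EY_mono: "Y \<subseteq> W \<Longrightarrow> EY Y \<subseteq> EY W"
  by (auto simp: EY_def)

lemma finite_CP: "finite Y \<Longrightarrow> finite (CP Y)"
  by (rule finite_subset[of _ "Pow Y \<times> Pow Y"]) (auto simp: CP_def)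

lemma finite_CP': "finite Y \<Longrightarrow> finite (CP' Y)"
  by (simp add: CP'_def finite_CP)

lemma empty_CP: "({}, {}) \<in> CP Y"
  by (simp add: CP_def compat_def)

lemma Dn_Suc: "Dn (Suc n) = Dn n \<union> {int n + 2, - (int n + 2)}"
  by (auto simp: Dn_def Nn_def)

lemma Dn_abs: "d \<in> Dn n \<Longrightarrow> - (int n + 1) \<le> d \<and> d \<le> int n + 1"
  by (auto simp: Dn_def Nn_def)

lemma one_notin_Dn: "1 \<notin> Dn n" "- 1 \<notin> Dn n"
  by (auto simp: Dn_def Nn_def)

lemma finite_Dn: "finite (Dn n)"
  by (simp add: Dn_def finite_Nn)

lemma finite_cols: "finite Y \<Longrightarrow> finite (cols Y n)"
  unfolding cols_def
  by (rule finite_subset[OF _ finite_PiE[of Y "\<lambda>_. Dn n"]]) (auto simp: finite_Dn)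

lemma proper_iff: "proper_coloring Y E' ends sg \<kappa> \<longleftrightarrow>
   (\<forall>e\<in>E'. \<kappa> (fst (ends e)) \<noteq> (if sg e then 1 else -1) * \<kappa> (snd (ends e)))"
  by (simp add: proper_coloring_def)

lemma cnt_Suc:
  assumes Y: "finite Y"
  shows "cnt Y (Suc n) = (\<Sum>p\<in>CP Y. cnt (Y - fst p - snd p) n)"
proof -
  define c :: int where "c = int n + 2"
  define F where "F \<kappa> = (({v\<in>Y. \<kappa> v = c}, {v\<in>Y. \<kappa> v = -c}),
      restrict \<kappa> (Y - {v\<in>Y. \<kappa> v = c} - {v\<in>Y. \<kappa> v = -c}))" for \<kappa> :: "'v \<Rightarrow> int"
  define G where "G x = (\<lambda>v. if v \<in> fst (fst x) then c else if v \<in> snd (fst x) then -c else snd x v)"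
    for x :: "('v set \<times> 'v set) \<times> ('v \<Rightarrow> int)"
  have cpos: "c > int n + 1" by (simp add: c_def)
  have bij: "bij_betw F (cols Y (Suc n)) (Sigma (CP Y) (\<lambda>p. cols (Y - fst p - snd p) n))"
  proof (rule bij_betw_byWitness[where f'=G])
    show "\<forall>\<kappa>\<in>cols Y (Suc n). G (F \<kappa>) = \<kappa>"
    proof
      fix \<kappa> assume k: "\<kappa> \<in> cols Y (Suc n)"
      show "G (F \<kappa>) = \<kappa>"
      proof
        fix v show "G (F \<kappa>) v = \<kappa> v"
          using k by (cases "v \<in> Y") (auto simp: G_def F_def cols_def PiE_def extensional_def)
      qed
    qed
    show "\<forall>x\<in>Sigma (CP Y) (\<lambda>p. cols (Y - fst p - snd p) n). F (G x) = x"
    proof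
      fix x assume x: "x \<in> Sigma (CP Y) (\<lambda>p. cols (Y - fst p - snd p) n)"
      obtain T U lm where xe: "x = ((T, U), lm)" by (metis prod.collapse)
      have TU: "T \<subseteq> Y" "U \<subseteq> Y" "T \<inter> U = {}" and lam: "lm \<in> (Y - T - U) \<rightarrow>\<^sub>E Dn n"
        using x by (auto simp: xe CP_def cols_def)
      have lv: "v \<in> Y - T - U \<Longrightarrow> lm v \<noteq> c \<and> lm v \<noteq> -c" for v
        using lam Dn_abs[of "lm v" n] cpos by (auto simp: PiE_def Pi_def)
      have g: "G x = (\<lambda>v. if v \<in> T then c else if v \<in> U then -c else lm v)" by (simp only: G_def xe fst_conv snd_conv)
      have 1: "{v\<in>Y. G x v = c} = T" using TU lv cpos by (auto simp: g)
      have 2: "{v\<in>Y. G x v = -c} = U" using TU lv cpos by (auto simp: g)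
      have 3: "restrict (G x) (Y - T - U) = lm"
        using lam by (auto simp: g fun_eq_iff PiE_def extensional_def)
      show "F (G x) = x" unfolding F_def 1 2 3 by (simp add: xe)
    qed
    show "F ` cols Y (Suc n) \<subseteq> Sigma (CP Y) (\<lambda>p. cols (Y - fst p - snd p) n)"
    proof
      fix y assume "y \<in> F ` cols Y (Suc n)"
      then obtain \<kappa> where k: "\<kappa> \<in> cols Y (Suc n)" and y: "y = F \<kappa>" by blast
      define T where "T = {v\<in>Y. \<kappa> v = c}"
      define U where "U = {v\<in>Y. \<kappa> v = -c}"
      have kY: "\<kappa> \<in> Y \<rightarrow>\<^sub>E Dn (Suc n)" and pr: "proper_coloring Y (EY Y) ends sg \<kappa>"
        using k by (auto simp: cols_def)
      have TU: "T \<subseteq> Y" "U \<subseteq> Y" "T \<inter> U = {}" using cpos by (auto simp: T_def U_def)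
      have comp: "compat T U"
        unfolding compat_def
      proof (intro ballI impI)
        fix e assume e: "e \<in> E" and xy: "fst (ends e) \<in> T \<union> U \<and> snd (ends e) \<in> T \<union> U"
        then have "e \<in> EY Y" using TU by (auto simp: EY_def)
        then have "\<kappa> (fst (ends e)) \<noteq> (if sg e then 1 else -1) * \<kappa> (snd (ends e))"
          using pr by (simp add: proper_iff)
        then show "sg e \<longleftrightarrow> ((fst (ends e) \<in> T) \<noteq> (snd (ends e) \<in> T))"
          using xy cpos by (auto simp: T_def U_def split: if_splits)
      qed
      have r: "restrict \<kappa> (Y - T - U) \<in> (Y - T - U) \<rightarrow>\<^sub>E Dn n"
        using kY by (auto simp: T_def U_def Dn_Suc PiE_def Pi_def c_def)
      have rp: "proper_coloring (Y - T - U) (EY (Y - T - U)) ends sg (restrict \<kappa> (Y - T - U))"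
        using pr EY_mono[of "Y - T - U" Y] by (auto simp: proper_iff EY_def)
      show "y \<in> Sigma (CP Y) (\<lambda>p. cols (Y - fst p - snd p) n)"
        using TU comp r rp by (simp add: y F_def T_def[symmetric] U_def[symmetric] CP_def cols_def)
    qed
    show "G ` Sigma (CP Y) (\<lambda>p. cols (Y - fst p - snd p) n) \<subseteq> cols Y (Suc n)"
    proof
      fix z assume "z \<in> G ` Sigma (CP Y) (\<lambda>p. cols (Y - fst p - snd p) n)"
      then obtain x where x: "x \<in> Sigma (CP Y) (\<lambda>p. cols (Y - fst p - snd p) n)" and z: "z = G x" by blast
      obtain T U lm where xe: "x = ((T, U), lm)" by (metis prod.collapse)
      have TU: "T \<subseteq> Y" "U \<subseteq> Y" "T \<inter> U = {}" and comp: "compat T U"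
        and lam: "lm \<in> (Y - T - U) \<rightarrow>\<^sub>E Dn n"
        and lp: "proper_coloring (Y - T - U) (EY (Y - T - U)) ends sg lm"
        using x by (auto simp: xe CP_def cols_def)
      have g: "z = (\<lambda>v. if v \<in> T then c else if v \<in> U then -c else lm v)" by (simp only: z G_def xe fst_conv snd_conv)
      have lb: "v \<in> Y - T - U \<Longrightarrow> - (int n + 1) \<le> lm v \<and> lm v \<le> int n + 1" for v
        using lam Dn_abs by (auto simp: PiE_def Pi_def)
      have zY: "z \<in> Y \<rightarrow>\<^sub>E Dn (Suc n)"
        using lam TU by (auto simp: g Dn_Suc c_def PiE_def Pi_def extensional_def)
      have zp: "proper_coloring Y (EY Y) ends sg z"
        unfolding proper_iff
      proof
        fix e assume e: "e \<in> EY Y"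
        define a where "a = fst (ends e)"
        define b where "b = snd (ends e)"
        have ab: "a \<in> Y" "b \<in> Y" "e \<in> E" using e by (auto simp: EY_def a_def b_def)
        show "z (fst (ends e)) \<noteq> (if sg e then 1 else -1) * z (snd (ends e))"
          unfolding a_def[symmetric] b_def[symmetric]
        proof (cases "a \<in> T \<union> U"; cases "b \<in> T \<union> U")
          assume "a \<in> T \<union> U" "b \<in> T \<union> U"
          then have "sg e \<longleftrightarrow> ((a \<in> T) \<noteq> (b \<in> T))" using comp ab by (auto simp: compat_def a_def b_def)
          then show "z a \<noteq> (if sg e then 1 else -1) * z b"
            using \<open>a \<in> T \<union> U\<close> \<open>b \<in> T \<union> U\<close> TU cpos by (auto simp: g)
        next
          assume "a \<in> T \<union> U" "b \<notin> T \<union> U"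
          then show "z a \<noteq> (if sg e then 1 else -1) * z b"
            using lb[of b] ab cpos by (auto simp: g)
        next
          assume "a \<notin> T \<union> U" "b \<in> T \<union> U"
          then show "z a \<noteq> (if sg e then 1 else -1) * z b"
            using lb[of a] ab cpos by (auto simp: g)
        next
          assume "a \<notin> T \<union> U" "b \<notin> T \<union> U"
          then have "e \<in> EY (Y - T - U)" using ab by (auto simp: EY_def a_def b_def)
          then have "lm a \<noteq> (if sg e then 1 else -1) * lm b" using lp by (auto simp: proper_iff a_def b_def)
          then show "z a \<noteq> (if sg e then 1 else -1) * z b"
            using \<open>a \<notin> T \<union> U\<close> \<open>b \<notin> T \<union> U\<close> by (simp add: g)
        qed
      qed
      show "z \<in> cols Y (Suc n)" using zY zp by (simp add: cols_def)
    qed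
  qed
  have "cnt Y (Suc n) = card (Sigma (CP Y) (\<lambda>p. cols (Y - fst p - snd p) n))"
    unfolding cnt_def by (rule bij_betw_same_card[OF bij])
  also have "\<dots> = (\<Sum>p\<in>CP Y. cnt (Y - fst p - snd p) n)"
    unfolding cnt_def using Y by (subst card_SigmaI) (auto simp: finite_CP finite_cols)
  finally show ?thesis .
qed

lemma cnt_0: "finite Y \<Longrightarrow> cnt Y 0 = (if EY Y = {} then 1 else 0)"
proof -
  assume Y: "finite Y"
  have D0: "Dn 0 = {0}" by (auto simp: Dn_def Nn_def)
  have P: "Y \<rightarrow>\<^sub>E Dn 0 = {\<lambda>v\<in>Y. 0}"
    by (auto simp: D0 PiE_def Pi_def extensional_def fun_eq_iff)
  have "proper_coloring Y (EY Y) ends sg (\<lambda>v\<in>Y. 0) \<longleftrightarrow> EY Y = {}"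
    by (auto simp: proper_iff EY_def)
  then have "cols Y 0 = (if EY Y = {} then {\<lambda>v\<in>Y. 0} else {})"
    unfolding cols_def P by auto
  then show ?thesis by (simp add: cnt_def)
qed

fun cc :: "nat \<Rightarrow> 'v set \<Rightarrow> rat" where
  "cc 0 Y = of_nat (cnt Y 0)"
| "cc (Suc j) Y = (\<Sum>p\<in>CP' Y. cc j (Y - fst p - snd p))"

lemma card_CP'_less:
  assumes "finite Y" "p \<in> CP' Y"
  shows "card (Y - fst p - snd p) < card Y"
proof -
  have "fst p \<subseteq> Y" "snd p \<subseteq> Y" "p \<noteq> ({}, {})" using assms by (auto simp: CP'_def CP_def)
  then have "fst p \<union> snd p \<noteq> {}" "fst p \<union> snd p \<subseteq> Y" by (auto simp: prod_eq_iff)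
  then have "Y - fst p - snd p \<subset> Y" by blast
  then show ?thesis using assms(1) by (simp add: psubset_card_mono)
qed

lemma cc_vanish: "finite Y \<Longrightarrow> card Y < j \<Longrightarrow> cc j Y = 0"
proof (induction j arbitrary: Y)
  case 0 then show ?case by simp
next
  case (Suc j)
  have "cc j (Y - fst p - snd p) = 0" if "p \<in> CP' Y" for p
    using Suc.IH[of "Y - fst p - snd p"] card_CP'_less[OF Suc.prems(1) that] Suc.prems by simp
  then show ?case by simp
qed

lemma pascal_sum:
  "(\<Sum>j\<le>Suc M. of_nat (Suc n choose j) * (a j :: rat)) =
   (\<Sum>j\<le>Suc M. of_nat (n choose j) * a j) + (\<Sum>j\<le>M. of_nat (n choose j) * a (Suc j))"
proof -
  have "(\<Sum>j\<le>Suc M. of_nat (Suc n choose j) * a j) = a 0 + (\<Sum>j\<le>M. of_nat (Suc n choose Suc j) * a (Suc j))"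
    by (subst sum.atMost_Suc_shift) simp
  also have "\<dots> = a 0 + (\<Sum>j\<le>M. of_nat (n choose Suc j) * a (Suc j)) + (\<Sum>j\<le>M. of_nat (n choose j) * a (Suc j))"
    by (simp add: sum.distrib algebra_simps)
  also have "a 0 + (\<Sum>j\<le>M. of_nat (n choose Suc j) * a (Suc j)) = (\<Sum>j\<le>Suc M. of_nat (n choose j) * a j)"
    by (simp only: sum.atMost_Suc_shift, simp)
  finally show ?thesis .
qed

lemma cnt_binom:
  "finite Y \<Longrightarrow> card Y \<le> M \<Longrightarrow> of_nat (cnt Y n) = (\<Sum>j\<le>Suc M. of_nat (n choose j) * cc j Y)"
proof (induction n arbitrary: Y)
  case 0
  have "(\<Sum>j\<le>Suc M. of_nat (0 choose j) * cc j Y) = cc 0 Y"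
    by (subst sum.atMost_Suc_shift) simp
  then show ?case by simp
next
  case (Suc n)
  have fin: "finite (CP' Y)" using Suc.prems by (simp add: finite_CP')
  have split: "(\<Sum>p\<in>CP Y. cnt (Y - fst p - snd p) n) = cnt Y n + (\<Sum>p\<in>CP' Y. cnt (Y - fst p - snd p) n)"
    unfolding CP'_def by (subst sum.remove[OF finite_CP[OF Suc.prems(1)] empty_CP]) simp
  have IHp: "of_nat (cnt (Y - fst p - snd p) n) = (\<Sum>j\<le>Suc M. of_nat (n choose j) * cc j (Y - fst p - snd p))"
    if "p \<in> CP' Y" for p
    using Suc.IH[of "Y - fst p - snd p"] card_CP'_less[OF Suc.prems(1) that] Suc.prems by simp
  have "(of_nat (cnt Y (Suc n)) :: rat) = of_nat (cnt Y n) + (\<Sum>p\<in>CP' Y. of_nat (cnt (Y - fst p - snd p) n))"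
    using cnt_Suc[OF Suc.prems(1), of n] split by simp
  also have "\<dots> = (\<Sum>j\<le>Suc M. of_nat (n choose j) * cc j Y) +
      (\<Sum>p\<in>CP' Y. \<Sum>j\<le>Suc M. of_nat (n choose j) * cc j (Y - fst p - snd p))"
    using Suc.IH[OF Suc.prems] IHp by simp
  also have "(\<Sum>p\<in>CP' Y. \<Sum>j\<le>Suc M. of_nat (n choose j) * cc j (Y - fst p - snd p))
      = (\<Sum>j\<le>Suc M. of_nat (n choose j) * cc (Suc j) Y)"
    by (simp add: sum.swap[of _ "CP' Y"] sum_distrib_left)
  also have "\<dots> = (\<Sum>j\<le>M. of_nat (n choose j) * cc (Suc j) Y)"
    using cc_vanish[OF Suc.prems(1), of "Suc (Suc M)"] Suc.prems(2) by simp
  finally have X: "(of_nat (cnt Y (Suc n)) :: rat) = (\<Sum>j\<le>Suc M. of_nat (n choose j) * cc j Y) + (\<Sum>j\<le>M. of_nat (n choose j) * cc (Suc j) Y)" .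
  show ?case by (subst pascal_sum) (rule X)
qed

definition uu :: "'v set \<Rightarrow> rat" where
  "uu Y = (\<Sum>j\<le>Suc (card V). (-1) ^ j * cc j Y)"

lemma uu_rec:
  assumes Y: "Y \<subseteq> V"
  shows "uu Y = cc 0 Y - (\<Sum>p\<in>CP' Y. uu (Y - fst p - snd p))"
proof -
  have finY: "finite Y" using Y finV finite_subset by blast
  have cY: "card Y \<le> card V" using Y finV by (simp add: card_mono)
  have "uu Y = cc 0 Y + (\<Sum>j\<le>card V. (-1) ^ Suc j * cc (Suc j) Y)"
    unfolding uu_def by (subst sum.atMost_Suc_shift) simp
  also have "(\<Sum>j\<le>card V. (-1) ^ Suc j * cc (Suc j) Y) =
      - (\<Sum>p\<in>CP' Y. \<Sum>j\<le>card V. (-1) ^ j * cc j (Y - fst p - snd p))"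
    by (simp add: sum_distrib_left sum.swap[of _ "CP' Y"] sum_negf)
  also have "(\<Sum>p\<in>CP' Y. \<Sum>j\<le>card V. (-1) ^ j * cc j (Y - fst p - snd p)) = (\<Sum>p\<in>CP' Y. uu (Y - fst p - snd p))"
  proof (rule sum.cong[OF refl])
    fix p assume p: "p \<in> CP' Y"
    have "cc (Suc (card V)) (Y - fst p - snd p) = 0"
      using cc_vanish[of "Y - fst p - snd p" "Suc (card V)"] card_CP'_less[OF finY p] cY finY by simp
    then show "(\<Sum>j\<le>card V. (-1) ^ j * cc j (Y - fst p - snd p)) = uu (Y - fst p - snd p)"
      unfolding uu_def by simp
  qed
  finally show ?thesis by simp
qed

definition KK :: "nat \<Rightarrow> ('v \<Rightarrow> int) set" where
  "KK n = {\<kappa>\<in>V \<rightarrow>\<^sub>E Cn n. proper_coloring V E ends sg \<kappa>}"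

lemma EY_V: "EY V = E"
  using ends_in by (auto simp: EY_def)

lemma Cn_Dn: "Cn n = insert 1 (Dn n)"
  by (simp add: Cn_eq Dn_def)

lemma finite_KK: "finite (KK n)"
  unfolding KK_def
  by (rule finite_subset[OF _ finite_PiE[OF finV, of "\<lambda>_. Cn n"]]) (auto simp: finite_Cn)

lemma card_fiber_S:
  assumes S: "S \<subseteq> V"
  shows "card {\<kappa>\<in>KK n. {v\<in>V. \<kappa> v = 1} = S} = (if compat S {} then cnt (V - S) n else 0)"
proof (cases "compat S {}")
  case False
  have "{\<kappa>\<in>KK n. {v\<in>V. \<kappa> v = 1} = S} = {}"
  proof (rule ccontr)
    assume "{\<kappa>\<in>KK n. {v\<in>V. \<kappa> v = 1} = S} \<noteq> {}"
    then obtain \<kappa> where k: "\<kappa> \<in> KK n" "{v\<in>V. \<kappa> v = 1} = S" by blast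
    from False obtain e where e: "e \<in> E" "fst (ends e) \<in> S" "snd (ends e) \<in> S" and sge: "sg e"
      by (auto simp: compat_def)
    have "\<kappa> (fst (ends e)) = 1" "\<kappa> (snd (ends e)) = 1" using k e by auto
    moreover have "\<kappa> (fst (ends e)) \<noteq> (if sg e then 1 else -1) * \<kappa> (snd (ends e))"
      using k e by (auto simp: KK_def proper_iff)
    ultimately show False using sge by simp
  qed
  then show ?thesis using False by (simp only: card.empty if_False)
next
  case True
  define F where "F \<kappa> = restrict \<kappa> (V - S)" for \<kappa> :: "'v \<Rightarrow> int"
  define G where "G lm = (\<lambda>v. if v \<in> S then 1 else lm v)" for lm :: "'v \<Rightarrow> int"
  have bij: "bij_betw F {\<kappa>\<in>KK n. {v\<in>V. \<kappa> v = 1} = S} (cols (V - S) n)"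
  proof (rule bij_betw_byWitness[where f'=G])
    show "\<forall>\<kappa>\<in>{\<kappa>\<in>KK n. {v\<in>V. \<kappa> v = 1} = S}. G (F \<kappa>) = \<kappa>"
    proof
      fix \<kappa> assume k: "\<kappa> \<in> {\<kappa>\<in>KK n. {v\<in>V. \<kappa> v = 1} = S}"
      show "G (F \<kappa>) = \<kappa>"
      proof
        fix v show "G (F \<kappa>) v = \<kappa> v"
          using k S by (cases "v \<in> V") (auto simp: G_def F_def KK_def PiE_def extensional_def)
      qed
    qed
    show "\<forall>lm\<in>cols (V - S) n. F (G lm) = lm"
      by (auto simp: F_def G_def cols_def PiE_def extensional_def fun_eq_iff)
    show "F ` {\<kappa>\<in>KK n. {v\<in>V. \<kappa> v = 1} = S} \<subseteq> cols (V - S) n"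
    proof
      fix y assume "y \<in> F ` {\<kappa>\<in>KK n. {v\<in>V. \<kappa> v = 1} = S}"
      then obtain \<kappa> where k: "\<kappa> \<in> KK n" "{v\<in>V. \<kappa> v = 1} = S" and y: "y = F \<kappa>" by blast
      have "F \<kappa> \<in> (V - S) \<rightarrow>\<^sub>E Dn n"
        using k by (auto simp: F_def KK_def Cn_Dn PiE_def Pi_def)
      moreover have "proper_coloring (V - S) (EY (V - S)) ends sg (F \<kappa>)"
        using k by (auto simp: F_def KK_def proper_iff EY_def)
      ultimately show "y \<in> cols (V - S) n" by (simp add: y cols_def)
    qed
    show "G ` cols (V - S) n \<subseteq> {\<kappa>\<in>KK n. {v\<in>V. \<kappa> v = 1} = S}"
    proof
      fix z assume "z \<in> G ` cols (V - S) n"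
      then obtain lm where lm: "lm \<in> cols (V - S) n" and z: "z = G lm" by blast
      have lmD: "lm \<in> (V - S) \<rightarrow>\<^sub>E Dn n" and lp: "proper_coloring (V - S) (EY (V - S)) ends sg lm"
        using lm by (auto simp: cols_def)
      have lv: "v \<in> V - S \<Longrightarrow> lm v \<noteq> 1 \<and> lm v \<noteq> -1" for v
        using lmD one_notin_Dn by (auto simp: PiE_def Pi_def)
      have zV: "z \<in> V \<rightarrow>\<^sub>E Cn n"
        using lmD S by (auto simp: z G_def Cn_Dn PiE_def Pi_def extensional_def)
      have zp: "proper_coloring V E ends sg z"
        unfolding proper_iff
      proof
        fix e assume e: "e \<in> E"
        define a where "a = fst (ends e)"
        define b where "b = snd (ends e)"
        have ab: "a \<in> V" "b \<in> V" using e ends_in by (auto simp: a_def b_def)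
        show "z (fst (ends e)) \<noteq> (if sg e then 1 else -1) * z (snd (ends e))"
          unfolding a_def[symmetric] b_def[symmetric]
        proof (cases "a \<in> S"; cases "b \<in> S")
          assume "a \<in> S" "b \<in> S"
          then have "\<not> sg e" using True e by (auto simp: compat_def a_def b_def)
          then show "z a \<noteq> (if sg e then 1 else -1) * z b"
            using \<open>a \<in> S\<close> \<open>b \<in> S\<close> by (simp add: z G_def)
        next
          assume "a \<in> S" "b \<notin> S"
          then show "z a \<noteq> (if sg e then 1 else -1) * z b"
            using lv[of b] ab by (auto simp: z G_def)
        next
          assume "a \<notin> S" "b \<in> S"
          then show "z a \<noteq> (if sg e then 1 else -1) * z b"
            using lv[of a] ab by (auto simp: z G_def)
        next
          assume "a \<notin> S" "b \<notin> S"
          then have "e \<in> EY (V - S)" using ab e by (auto simp: EY_def a_def b_def)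
          then have "lm a \<noteq> (if sg e then 1 else -1) * lm b" using lp by (auto simp: proper_iff a_def b_def)
          then show "z a \<noteq> (if sg e then 1 else -1) * z b"
            using \<open>a \<notin> S\<close> \<open>b \<notin> S\<close> by (simp add: z G_def)
        qed
      qed
      have zS: "{v\<in>V. z v = 1} = S" using lv S by (auto simp: z G_def)
      show "z \<in> {\<kappa>\<in>KK n. {v\<in>V. \<kappa> v = 1} = S}" using zV zp zS by (simp add: KK_def)
    qed
  qed
  then show ?thesis using True by (simp add: cnt_def bij_betw_same_card)
qed

lemma decomp_S:
  "(\<Sum>\<kappa>\<in>KK n. \<Prod>v\<in>V. vt t (\<kappa> v)) =
   (\<Sum>S\<in>Pow V. if compat S {} then (t - 1) ^ card S * (-1) ^ card (V - S) * of_nat (cnt (V - S) n) else 0)"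
proof -
  have "(\<Sum>\<kappa>\<in>KK n. \<Prod>v\<in>V. vt t (\<kappa> v)) =
      (\<Sum>S\<in>Pow V. \<Sum>\<kappa>\<in>{\<kappa>\<in>KK n. {v\<in>V. \<kappa> v = 1} = S}. \<Prod>v\<in>V. vt t (\<kappa> v))"
    by (rule sum.group[symmetric]) (auto simp: finite_KK finV)
  also have "\<dots> = (\<Sum>S\<in>Pow V. if compat S {} then (t - 1) ^ card S * (-1) ^ card (V - S) * of_nat (cnt (V - S) n) else 0)"
  proof (rule sum.cong[OF refl])
    fix S assume "S \<in> Pow V"
    then have S: "S \<subseteq> V" by simp
    have w: "(\<Prod>v\<in>V. vt t (\<kappa> v)) = (t - 1) ^ card S * (-1) ^ card (V - S)"
      if "\<kappa> \<in> {\<kappa>\<in>KK n. {v\<in>V. \<kappa> v = 1} = S}" for \<kappa>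
    proof -
      have k1: "v \<in> S \<Longrightarrow> \<kappa> v = 1" "v \<in> V - S \<Longrightarrow> \<kappa> v \<noteq> 1" for v using that by auto
      have "(\<Prod>v\<in>V. vt t (\<kappa> v)) = (\<Prod>v\<in>V - S. vt t (\<kappa> v)) * (\<Prod>v\<in>S. vt t (\<kappa> v))"
        by (rule prod.subset_diff[OF S finV])
      also have "(\<Prod>v\<in>V - S. vt t (\<kappa> v)) = (\<Prod>v\<in>V - S. -1)"
        by (rule prod.cong[OF refl]) (simp add: vt_def k1)
      also have "(\<Prod>v\<in>S. vt t (\<kappa> v)) = (\<Prod>v\<in>S. t - 1)"
        by (rule prod.cong[OF refl]) (simp add: vt_def k1)
      finally show ?thesis by simp
    qed
    have "(\<Sum>\<kappa>\<in>{\<kappa>\<in>KK n. {v\<in>V. \<kappa> v = 1} = S}. \<Prod>v\<in>V. vt t (\<kappa> v)) =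
        of_nat (card {\<kappa>\<in>KK n. {v\<in>V. \<kappa> v = 1} = S}) * ((t - 1) ^ card S * (-1) ^ card (V - S))"
      using w by simp
    then show "(\<Sum>\<kappa>\<in>{\<kappa>\<in>KK n. {v\<in>V. \<kappa> v = 1} = S}. \<Prod>v\<in>V. vt t (\<kappa> v)) =
        (if compat S {} then (t - 1) ^ card S * (-1) ^ card (V - S) * of_nat (cnt (V - S) n) else 0)"
      by (simp add: card_fiber_S[OF S])
  qed
  finally show ?thesis .
qed

end


lemma has_cycle_mono:
  assumes "has_cycle E1 ends \<tau>1" "E1 \<subseteq> E2" "\<forall>e\<in>E1. \<forall>s. \<tau>2 (e, s) = \<tau>1 (e, s)"
  shows "has_cycle E2 ends \<tau>2"
proof -
  from assms(1) obtain vs es where w: "es \<noteq> []" "length vs = Suc (length es)" "hd vs = last vs" "set es \<subseteq> E1"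
    "\<forall>i<length es. {endpoint ends (es!i) True, endpoint ends (es!i) False} = {vs!i, vs!Suc i}"
    "\<forall>w\<in>set vs. (\<exists>e\<in>set es. \<exists>s. endpoint ends e s = w \<and> \<tau>1 (e, s)) \<and>
                 (\<exists>e\<in>set es. \<exists>s. endpoint ends e s = w \<and> \<not> \<tau>1 (e, s))"
    unfolding has_cycle_def by blast
  have eq: "e \<in> set es \<Longrightarrow> \<tau>2 (e, s) = \<tau>1 (e, s)" for e s using w(4) assms(3) by blast
  have c6: "\<forall>w\<in>set vs. (\<exists>e\<in>set es. \<exists>s. endpoint ends e s = w \<and> \<tau>2 (e, s)) \<and>
                 (\<exists>e\<in>set es. \<exists>s. endpoint ends e s = w \<and> \<not> \<tau>2 (e, s))"
  proof
    fix w assume "w \<in> set vs"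
    then obtain e1 s1 e2 s2 where "e1 \<in> set es" "endpoint ends e1 s1 = w" "\<tau>1 (e1, s1)"
      "e2 \<in> set es" "endpoint ends e2 s2 = w" "\<not> \<tau>1 (e2, s2)" using w(6) by blast
    then show "(\<exists>e\<in>set es. \<exists>s. endpoint ends e s = w \<and> \<tau>2 (e, s)) \<and>
                 (\<exists>e\<in>set es. \<exists>s. endpoint ends e s = w \<and> \<not> \<tau>2 (e, s))"
      using eq by metis
  qed
  have s: "set es \<subseteq> E2" using w(4) assms(2) by blast
  show ?thesis unfolding has_cycle_def
    apply (rule exI[of _ vs], rule exI[of _ es])
    using w(1,2,3,5) c6 s by simp
qed

lemma walk_vertex:
  assumes "length vs = Suc (length es)" "hd vs = last vs" "es \<noteq> []"
    "\<forall>i<length es. {endpoint ends (es!i) True, endpoint ends (es!i) False} = {vs!i, vs!Suc i}"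
    "e \<in> set es"
  shows "endpoint ends e s \<in> set vs"
proof -
  obtain i where i: "i < length es" "es ! i = e" using assms(5) by (metis in_set_conv_nth)
  have "endpoint ends e s \<in> {vs!i, vs!Suc i}" using assms(4) i by (cases s) auto
  moreover have "vs ! i \<in> set vs" "vs ! Suc i \<in> set vs" using i assms(1) by auto
  ultimately show ?thesis by auto
qed

context sgraph
begin

definition AO :: "'v set \<Rightarrow> ('e \<times> bool \<Rightarrow> bool) set" where
  "AO Y = {\<tau> \<in> orientations (EY Y) sg. acyclic_orientation (EY Y) ends \<tau>}"
definition srcs :: "'v set \<Rightarrow> 'e set \<Rightarrow> ('e \<times> bool \<Rightarrow> bool) \<Rightarrow> 'v set" where
  "srcs Y E' \<tau> = {v\<in>Y. \<forall>e\<in>E'. \<forall>s. endpoint ends e s = v \<longrightarrow> \<not> \<tau> (e, s)}"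

lemma endpoint_in_Y: "e \<in> EY Y \<Longrightarrow> endpoint ends e s \<in> Y"
  by (cases s) (auto simp: EY_def endpoint_def)

lemma cycle_avoid:
  assumes cyc: "has_cycle (EY Y) ends \<tau>" and T: "T \<subseteq> sinks Y (EY Y) ends \<tau>" and U: "U \<subseteq> srcs Y (EY Y) \<tau>"
  shows "has_cycle (EY (Y - T - U)) ends \<tau>"
proof -
  from cyc obtain vs es where w: "es \<noteq> []" "length vs = Suc (length es)" "hd vs = last vs" "set es \<subseteq> EY Y"
    "\<forall>i<length es. {endpoint ends (es!i) True, endpoint ends (es!i) False} = {vs!i, vs!Suc i}"
    "\<forall>w\<in>set vs. (\<exists>e\<in>set es. \<exists>s. endpoint ends e s = w \<and> \<tau> (e, s)) \<and>
                 (\<exists>e\<in>set es. \<exists>s. endpoint ends e s = w \<and> \<not> \<tau> (e, s))"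
    unfolding has_cycle_def by blast
  have notB: "w \<notin> T \<and> w \<notin> U" if "w \<in> set vs" for w
  proof
    show "w \<notin> T"
    proof
      assume "w \<in> T"
      then have "\<forall>e\<in>EY Y. \<forall>s. endpoint ends e s = w \<longrightarrow> \<tau> (e, s)" using T by (auto simp: sinks_def)
      then show False using w(6) that w(4) by blast
    qed
    show "w \<notin> U"
    proof
      assume "w \<in> U"
      then have "\<forall>e\<in>EY Y. \<forall>s. endpoint ends e s = w \<longrightarrow> \<not> \<tau> (e, s)" using U by (auto simp: srcs_def)
      then show False using w(6) that w(4) by blast
    qed
  qed
  have "set es \<subseteq> EY (Y - T - U)"
  proof
    fix e assume e: "e \<in> set es"
    have "endpoint ends e True \<in> set vs" "endpoint ends e False \<in> set vs"
      using walk_vertex[OF w(2) w(3) w(1) w(5) e] by auto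
    then have "fst (ends e) \<notin> T \<union> U" "snd (ends e) \<notin> T \<union> U" using notB by (auto simp: endpoint_def)
    moreover have "e \<in> EY Y" using e w(4) by blast
    ultimately show "e \<in> EY (Y - T - U)" by (auto simp: EY_def)
  qed
  note sub = this
  show ?thesis unfolding has_cycle_def
    apply (rule exI[of _ vs], rule exI[of _ es])
    using sub w(1,2,3,5,6) by simp
qed

lemma orient_cond:
  "\<tau> \<in> orientations E' sg \<Longrightarrow> e \<in> E' \<Longrightarrow> \<tau> (e, s) = (\<tau> (e, \<not> s) \<noteq> sg e)"
  by (cases s) (auto simp: orientations_def)

lemma endpoint_other:
  "{endpoint ends e s, endpoint ends e (\<not> s)} = {fst (ends e), snd (ends e)}"
  by (cases s) (auto simp: endpoint_def)

lemma forced_val: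
  assumes \<tau>: "\<tau> \<in> orientations (EY Y) sg" and T: "T \<subseteq> sinks Y (EY Y) ends \<tau>"
    and U: "U \<subseteq> srcs Y (EY Y) \<tau>" and TU: "T \<inter> U = {}" and e: "e \<in> EY Y"
  shows "endpoint ends e s \<in> T \<union> U \<Longrightarrow> \<tau> (e, s) = (endpoint ends e s \<in> T)"
proof -
  assume x: "endpoint ends e s \<in> T \<union> U"
  show "\<tau> (e, s) = (endpoint ends e s \<in> T)"
  proof (cases "endpoint ends e s \<in> T")
    case True then show ?thesis using T e by (auto simp: sinks_def)
  next
    case False then have "endpoint ends e s \<in> U" using x by blast
    then show ?thesis using U e False by (auto simp: srcs_def)
  qed
qed

definition fv :: "'v set \<Rightarrow> 'v set \<Rightarrow> 'e \<Rightarrow> bool \<Rightarrow> bool" where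
  "fv T U e s = (if endpoint ends e s \<in> T \<union> U then endpoint ends e s \<in> T
                 else ((endpoint ends e (\<not> s) \<in> T) \<noteq> sg e))"

lemma forced_fv:
  assumes \<tau>: "\<tau> \<in> orientations (EY Y) sg" and T: "T \<subseteq> sinks Y (EY Y) ends \<tau>"
    and U: "U \<subseteq> srcs Y (EY Y) \<tau>" and TU: "T \<inter> U = {}" and e: "e \<in> EY Y" "e \<notin> EY (Y - T - U)"
  shows "\<tau> (e, s) = fv T U e s"
proof (cases "endpoint ends e s \<in> T \<union> U")
  case True then show ?thesis using forced_val[OF \<tau> T U TU e(1)] by (simp add: fv_def)
next
  case False
  have "fst (ends e) \<in> Y" "snd (ends e) \<in> Y" using e by (auto simp: EY_def)
  then have "fst (ends e) \<in> T \<union> U \<or> snd (ends e) \<in> T \<union> U" using e by (auto simp: EY_def)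
  then have o: "endpoint ends e (\<not> s) \<in> T \<union> U" using False by (cases s) (auto simp: endpoint_def)
  have "\<tau> (e, s) = (\<tau> (e, \<not> s) \<noteq> sg e)" by (rule orient_cond[OF \<tau> e(1)])
  also have "\<tau> (e, \<not> s) = (endpoint ends e (\<not> s) \<in> T)" using forced_val[OF \<tau> T U TU e(1) o] .
  finally show ?thesis using False by (simp add: fv_def)
qed

lemma fix_count:
  assumes TY: "T \<subseteq> Y" and UY: "U \<subseteq> Y" and TU: "T \<inter> U = {}"
  shows "card {\<tau>\<in>AO Y. T \<subseteq> sinks Y (EY Y) ends \<tau> \<and> U \<subseteq> srcs Y (EY Y) \<tau>} =
         (if compat T U then card (AO (Y - T - U)) else 0)"
proof (cases "compat T U")
  case False
  have "{\<tau>\<in>AO Y. T \<subseteq> sinks Y (EY Y) ends \<tau> \<and> U \<subseteq> srcs Y (EY Y) \<tau>} = {}"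
  proof (rule ccontr)
    assume "{\<tau>\<in>AO Y. T \<subseteq> sinks Y (EY Y) ends \<tau> \<and> U \<subseteq> srcs Y (EY Y) \<tau>} \<noteq> {}"
    then obtain \<tau> where \<tau>: "\<tau> \<in> orientations (EY Y) sg" and T: "T \<subseteq> sinks Y (EY Y) ends \<tau>"
      and U: "U \<subseteq> srcs Y (EY Y) \<tau>" by (auto simp: AO_def)
    from False obtain e where e: "e \<in> E" "fst (ends e) \<in> T \<union> U" "snd (ends e) \<in> T \<union> U"
      and bad: "\<not> (sg e \<longleftrightarrow> ((fst (ends e) \<in> T) \<noteq> (snd (ends e) \<in> T)))"
      by (auto simp: compat_def)
    have eY: "e \<in> EY Y" using e TY UY by (auto simp: EY_def)
    have "\<tau> (e, True) = (fst (ends e) \<in> T)" using forced_val[OF \<tau> T U TU eY, of True] e by (simp add: endpoint_def)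
    moreover have "\<tau> (e, False) = (snd (ends e) \<in> T)" using forced_val[OF \<tau> T U TU eY, of False] e by (simp add: endpoint_def)
    moreover have "(\<tau> (e, True) \<noteq> \<tau> (e, False)) = sg e" using \<tau> eY by (auto simp: orientations_def)
    ultimately show False using bad by simp
  qed
  then show ?thesis using False by (simp only: card.empty if_False)
next
  case True
  define Y' where "Y' = Y - T - U"
  have sub: "EY Y' \<subseteq> EY Y" unfolding Y'_def by (rule EY_mono) blast
  define A1 where "A1 = {\<tau>\<in>AO Y. T \<subseteq> sinks Y (EY Y) ends \<tau> \<and> U \<subseteq> srcs Y (EY Y) \<tau>}"
  define F where "F \<tau> = restrict \<tau> (EY Y' \<times> UNIV)" for \<tau> :: "'e \<times> bool \<Rightarrow> bool"
  define G where "G \<rho> = (\<lambda>h. if fst h \<in> EY Y' then \<rho> h else if fst h \<in> EY Y then fv T U (fst h) (snd h) else undefined)"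
    for \<rho> :: "'e \<times> bool \<Rightarrow> bool"
  have bij: "bij_betw F A1 (AO Y')"
  proof (rule bij_betw_byWitness[where f'=G])
    show "\<forall>\<tau>\<in>A1. G (F \<tau>) = \<tau>"
    proof
      fix \<tau> assume "\<tau> \<in> A1"
      then have \<tau>: "\<tau> \<in> orientations (EY Y) sg" and T: "T \<subseteq> sinks Y (EY Y) ends \<tau>"
        and U: "U \<subseteq> srcs Y (EY Y) \<tau>" by (auto simp: A1_def AO_def)
      show "G (F \<tau>) = \<tau>"
      proof
        fix h :: "'e \<times> bool"
        obtain e s where h: "h = (e, s)" by (cases h)
        show "G (F \<tau>) h = \<tau> h"
        proof (cases "e \<in> EY Y'")
          case True then show ?thesis by (simp add: G_def F_def h)
        next
          case False
          show ?thesis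
          proof (cases "e \<in> EY Y")
            case True
            then show ?thesis using False forced_fv[OF \<tau> T U TU True, of s] by (simp add: G_def F_def h Y'_def)
          next
            case False
            then show ?thesis using \<tau> \<open>e \<notin> EY Y'\<close> by (auto simp: G_def F_def h orientations_def PiE_def extensional_def)
          qed
        qed
      qed
    qed
    show "\<forall>\<rho>\<in>AO Y'. F (G \<rho>) = \<rho>"
      by (auto simp: F_def G_def AO_def orientations_def PiE_def extensional_def fun_eq_iff)
    show "F ` A1 \<subseteq> AO Y'"
    proof
      fix y assume "y \<in> F ` A1"
      then obtain \<tau> where "\<tau> \<in> A1" and y: "y = F \<tau>" by blast
      then have \<tau>: "\<tau> \<in> orientations (EY Y) sg" and acy: "\<not> has_cycle (EY Y) ends \<tau>"
        by (auto simp: A1_def AO_def acyclic_orientation_def)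
      have o: "F \<tau> \<in> orientations (EY Y') sg"
        using \<tau> sub by (auto simp: F_def orientations_def PiE_def Pi_def)
      have "\<not> has_cycle (EY Y') ends (F \<tau>)"
      proof
        assume "has_cycle (EY Y') ends (F \<tau>)"
        then have "has_cycle (EY Y) ends \<tau>"
          by (rule has_cycle_mono[OF _ sub]) (auto simp: F_def)
        then show False using acy by simp
      qed
      then show "y \<in> AO Y'" using o by (simp add: y AO_def acyclic_orientation_def)
    qed
    show "G ` AO Y' \<subseteq> A1"
    proof
      fix z assume "z \<in> G ` AO Y'"
      then obtain \<rho> where \<rho>: "\<rho> \<in> AO Y'" and z: "z = G \<rho>" by blast
      have \<rho>o: "\<rho> \<in> orientations (EY Y') sg" and \<rho>a: "\<not> has_cycle (EY Y') ends \<rho>"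
        using \<rho> by (auto simp: AO_def acyclic_orientation_def)
      have ext: "G \<rho> \<in> (EY Y \<times> UNIV) \<rightarrow>\<^sub>E UNIV"
        using sub by (auto simp: G_def PiE_def extensional_def)
      have cond: "(G \<rho> (e, True) \<noteq> G \<rho> (e, False)) = sg e" if e: "e \<in> EY Y" for e
      proof (cases "e \<in> EY Y'")
        case True then show ?thesis using \<rho>o by (auto simp: G_def orientations_def)
      next
        case False
        have xy: "fst (ends e) \<in> Y" "snd (ends e) \<in> Y" using e by (auto simp: EY_def)
        have "fst (ends e) \<in> T \<union> U \<or> snd (ends e) \<in> T \<union> U" using False e xy by (auto simp: EY_def Y'_def)
        moreover have "fst (ends e) \<in> T \<union> U \<Longrightarrow> snd (ends e) \<in> T \<union> U \<Longrightarrow>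
            sg e \<longleftrightarrow> ((fst (ends e) \<in> T) \<noteq> (snd (ends e) \<in> T))"
          using True e by (auto simp: compat_def EY_def)
        ultimately show ?thesis using False e by (auto simp: G_def fv_def endpoint_def)
      qed
      have zo: "G \<rho> \<in> orientations (EY Y) sg" using ext cond by (simp add: orientations_def)
      have fvT: "G \<rho> (e, s) = (endpoint ends e s \<in> T)" if "e \<in> EY Y" "endpoint ends e s \<in> T \<union> U" for e s
      proof -
        have "e \<notin> EY Y'" using that endpoint_in_Y[of e Y' s] by (auto simp: Y'_def)
        then show ?thesis using that by (simp add: G_def fv_def)
      qed
      have zT: "T \<subseteq> sinks Y (EY Y) ends (G \<rho>)" using TY fvT by (auto simp: sinks_def)
      have zU: "U \<subseteq> srcs Y (EY Y) (G \<rho>)" using UY fvT TU by (auto simp: srcs_def)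
      have "\<not> has_cycle (EY Y) ends (G \<rho>)"
      proof
        assume "has_cycle (EY Y) ends (G \<rho>)"
        then have "has_cycle (EY Y') ends (G \<rho>)" unfolding Y'_def by (rule cycle_avoid[OF _ zT zU])
        then have "has_cycle (EY Y') ends \<rho>" by (rule has_cycle_mono) (auto simp: G_def)
        then show False using \<rho>a by simp
      qed
      then show "z \<in> A1" using zo zT zU by (simp add: z A1_def AO_def acyclic_orientation_def)
    qed
  qed
  then show ?thesis using True by (simp add: A1_def Y'_def bij_betw_same_card)
qed

end


lemma cycle_exists:
  assumes fin: "finite E'" and ne: "E' \<noteq> {}"
    and io: "\<forall>e\<in>E'. \<forall>s. (\<exists>e'\<in>E'. \<exists>s'. endpoint ends e' s' = endpoint ends e s \<and> \<tau> (e', s')) \<and>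
                        (\<exists>e'\<in>E'. \<exists>s'. endpoint ends e' s' = endpoint ends e s \<and> \<not> \<tau> (e', s'))"
  shows "has_cycle E' ends \<tau>"
proof -
  define ep where "ep h = endpoint ends (fst h) (snd h)" for h
  define dep where "dep h = (SOME d. fst d \<in> E' \<and> ep d = ep h \<and> \<tau> d \<noteq> \<tau> h)" for h
  define nxt where "nxt h = (fst (dep h), \<not> snd (dep h))" for h
  obtain e0 where e0: "e0 \<in> E'" using ne by blast
  define hs where "hs k = (nxt ^^ k) (e0, True)" for k
  have hsS: "hs (Suc k) = nxt (hs k)" for k by (simp add: hs_def)
  have dep_ok: "fst (dep h) \<in> E' \<and> ep (dep h) = ep h \<and> \<tau> (dep h) \<noteq> \<tau> h" if h: "fst h \<in> E'" for h
  proof -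
    have "\<exists>d. fst d \<in> E' \<and> ep d = ep h \<and> \<tau> d \<noteq> \<tau> h"
    proof (cases "\<tau> h")
      case True
      from io h obtain e' s' where "e' \<in> E'" "endpoint ends e' s' = ep h" "\<not> \<tau> (e', s')"
        unfolding ep_def by blast
      then show ?thesis using True by (intro exI[of _ "(e', s')"]) (simp add: ep_def)
    next
      case False
      from io h obtain e' s' where "e' \<in> E'" "endpoint ends e' s' = ep h" "\<tau> (e', s')"
        unfolding ep_def by blast
      then show ?thesis using False by (intro exI[of _ "(e', s')"]) (simp add: ep_def)
    qed
    then show ?thesis unfolding dep_def by (rule someI_ex)
  qed
  have inE: "fst (hs k) \<in> E'" for k
  proof (induction k)
    case 0 then show ?case using e0 by (simp add: hs_def)
  next
    case (Suc k) then show ?case using dep_ok by (simp add: hsS nxt_def)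
  qed
  define N where "N = card (E' \<times> (UNIV :: bool set))"
  have finS: "finite (E' \<times> (UNIV :: bool set))" using fin by simp
  have "\<not> inj_on hs {0..N}"
  proof
    assume "inj_on hs {0..N}"
    moreover have "hs ` {0..N} \<subseteq> E' \<times> UNIV"
    proof
      fix x assume "x \<in> hs ` {0..N}"
      then obtain k where "x = hs k" by blast
      then show "x \<in> E' \<times> UNIV" using inE[of k] by (simp add: mem_Times_iff)
    qed
    ultimately have "card {0..N} \<le> N" unfolding N_def using card_inj_on_le finS by blast
    then show False by simp
  qed
  then obtain i0 j0 where "i0 \<noteq> j0" "hs i0 = hs j0" unfolding inj_on_def by blast
  then obtain i j where ij: "i < j" "hs i = hs j"
    by (metis linorder_neqE_nat)
  define vs where "vs = map (\<lambda>k. ep (hs k)) [i..<Suc j]"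
  define es where "es = map (\<lambda>k. fst (hs (Suc k))) [i..<j]"
  have len_es: "length es = j - i" by (simp add: es_def)
  have len_vs: "length vs = Suc (length es)" using ij by (simp add: vs_def es_def)
  have es_ne: "es \<noteq> []" using ij by (simp add: es_def)
  have hd_last: "hd vs = last vs"
    using ij by (simp add: vs_def hd_map last_map upt_Suc)
  have set_es: "set es = (\<lambda>k. fst (hs (Suc k))) ` {i..<j}" by (simp add: es_def)
  have es_sub: "set es \<subseteq> E'" using inE by (auto simp: set_es)
  have nth_es: "l < j - i \<Longrightarrow> es ! l = fst (hs (Suc (i + l)))" for l by (simp add: es_def)
  have nth_vs: "l < Suc j - i \<Longrightarrow> vs ! l = ep (hs (i + l))" for l by (simp add: vs_def del: upt_Suc)
  have ends_ok: "\<forall>l<length es. {endpoint ends (es!l) True, endpoint ends (es!l) False} = {vs!l, vs!Suc l}"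
  proof (intro allI impI)
    fix l assume l: "l < length es"
    define d where "d = dep (hs (i + l))"
    have d: "ep d = ep (hs (i + l))" using dep_ok[OF inE[of "i + l"]] by (simp add: d_def)
    have e: "es ! l = fst d" using l len_es by (simp add: nth_es d_def hsS nxt_def)
    have v1: "vs ! l = endpoint ends (fst d) (snd d)" using l len_es d by (simp add: nth_vs ep_def)
    have v2: "vs ! Suc l = endpoint ends (fst d) (\<not> snd d)"
      using l len_es by (simp add: nth_vs ep_def d_def hsS nxt_def)
    show "{endpoint ends (es!l) True, endpoint ends (es!l) False} = {vs!l, vs!Suc l}"
      unfolding e v1 v2 by (cases "snd d") auto
  qed
  have arr: "fst (hs k) \<in> set es" if "i < k" "k \<le> j" for k
  proof -
    have "k \<noteq> 0" using that by simp
    then obtain m where m: "k = Suc m" by (cases k) auto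
    then have "m \<in> {i..<j}" using that by simp
    then show ?thesis unfolding set_es m by blast
  qed
  have dep_in: "fst (dep (hs k)) \<in> set es" if "i \<le> k" "k < j" for k
    using that by (auto simp: set_es hsS nxt_def)
  have inout: "\<forall>w\<in>set vs. (\<exists>e\<in>set es. \<exists>s. endpoint ends e s = w \<and> \<tau> (e, s)) \<and>
                 (\<exists>e\<in>set es. \<exists>s. endpoint ends e s = w \<and> \<not> \<tau> (e, s))"
  proof
    fix w assume "w \<in> set vs"
    then obtain k where k: "i \<le> k" "k \<le> j" "w = ep (hs k)" by (auto simp: vs_def)
    define k1 where "k1 = (if k = i then j else k)"
    define k2 where "k2 = (if k = j then i else k)"
    have k1: "i < k1" "k1 \<le> j" "hs k1 = hs k" using k ij by (auto simp: k1_def)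
    have k2: "i \<le> k2" "k2 < j" "hs k2 = hs k" using k ij by (auto simp: k2_def)
    define a where "a = hs k1"
    define d where "d = dep (hs k2)"
    have a: "fst a \<in> set es" "ep a = w" "\<tau> a = \<tau> (hs k)" using arr[OF k1(1,2)] k1 k by (auto simp: a_def)
    have d: "fst d \<in> set es" "ep d = w" "\<tau> d \<noteq> \<tau> (hs k)"
      using dep_in[OF k2(1,2)] dep_ok[OF inE[of k2]] k2 k by (auto simp: d_def)
    have "\<tau> (fst a, snd a) \<noteq> \<tau> (fst d, snd d)" using a d by simp
    moreover have "endpoint ends (fst a) (snd a) = w" "endpoint ends (fst d) (snd d) = w"
      using a d by (auto simp: ep_def)
    ultimately show "(\<exists>e\<in>set es. \<exists>s. endpoint ends e s = w \<and> \<tau> (e, s)) \<and>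
                 (\<exists>e\<in>set es. \<exists>s. endpoint ends e s = w \<and> \<not> \<tau> (e, s))"
      using a(1) d(1) by (cases "\<tau> (fst a, snd a)") blast+
  qed
  show ?thesis unfolding has_cycle_def
    apply (rule exI[of _ vs], rule exI[of _ es])
    using es_ne len_vs hd_last es_sub ends_ok inout by simp
qed


lemma alt_pow: "finite X \<Longrightarrow> (\<Sum>U\<in>Pow X. (-1::rat) ^ card U) = (if X = {} then 1 else 0)"
proof -
  assume X: "finite X"
  have "(\<Prod>x\<in>X. (1::rat) - 1) = (\<Sum>U\<in>Pow X. (- 1) ^ card U * prod (\<lambda>_. 1) U * prod (\<lambda>_. 1) (X - U))"
    by (rule prod_diff_conv_sum[OF X])
  then have eq: "(\<Sum>U\<in>Pow X. (-1::rat) ^ card U) = 0 ^ card X" by simp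
  show ?thesis using X by (simp add: eq power_0_left)
qed

lemma pair_sum:
  assumes A: "finite A" and B: "finite B"
  shows "(\<Sum>p\<in>{p. fst p \<subseteq> A \<and> snd p \<subseteq> B \<and> fst p \<inter> snd p = {}}. (-1::rat) ^ (card (fst p) + card (snd p)))
         = (if A = B then (-1) ^ card A else 0)"
proof -
  have set: "{p. fst p \<subseteq> A \<and> snd p \<subseteq> B \<and> fst p \<inter> snd p = {}} = Sigma (Pow A) (\<lambda>T. Pow (B - T))"
    by auto
  have "(\<Sum>p\<in>Sigma (Pow A) (\<lambda>T. Pow (B - T)). (-1::rat) ^ (card (fst p) + card (snd p)))
      = (\<Sum>T\<in>Pow A. \<Sum>U\<in>Pow (B - T). (-1::rat) ^ (card T + card U))"
    by (subst sum.Sigma) (use A B in \<open>auto simp: split_def\<close>)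
  also have "\<dots> = (\<Sum>T\<in>Pow A. (-1) ^ card T * (if B - T = {} then 1 else 0))"
    by (rule sum.cong[OF refl]) (use B in \<open>simp add: power_add sum_distrib_left[symmetric] alt_pow\<close>)
  also have "\<dots> = (\<Sum>T\<in>Pow A. if B \<subseteq> T then (-1) ^ card T else 0)"
    by (rule sum.cong) auto
  also have "\<dots> = (\<Sum>T\<in>{T\<in>Pow A. B \<subseteq> T}. (-1) ^ card T)"
    using sum.inter_filter[of "Pow A" "\<lambda>T. (-1::rat) ^ card T" "\<lambda>T. B \<subseteq> T"] A by simp
  also have "\<dots> = (if A = B then (-1) ^ card A else 0)"
  proof (cases "B \<subseteq> A")
    case True
    have "(\<Sum>T\<in>{T\<in>Pow A. B \<subseteq> T}. (-1::rat) ^ card T) = (\<Sum>R\<in>Pow (A - B). (-1) ^ card (B \<union> R))"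
      by (rule sum.reindex_bij_witness[where i="\<lambda>R. B \<union> R" and j="\<lambda>T. T - B"]) (use True in \<open>auto simp: sup.absorb2\<close>)
    also have "\<dots> = (\<Sum>R\<in>Pow (A - B). (-1) ^ card B * (-1) ^ card R)"
    proof (rule sum.cong[OF refl])
      fix R assume "R \<in> Pow (A - B)"
      then have "card (B \<union> R) = card B + card R"
        using A B by (subst card_Un_disjoint) (auto intro: finite_subset)
      then show "(-1::rat) ^ card (B \<union> R) = (-1) ^ card B * (-1) ^ card R" by (simp add: power_add)
    qed
    also have "\<dots> = (-1) ^ card B * (if A - B = {} then 1 else 0)"
      using A by (simp add: sum_distrib_left[symmetric] alt_pow)
    also have "\<dots> = (if A = B then (-1) ^ card A else 0)" using True by auto
    finally show ?thesis .
  next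
    case False
    then have e: "{T\<in>Pow A. B \<subseteq> T} = {}" by auto
    have "A \<noteq> B" using False by blast
    then show ?thesis unfolding e by simp
  qed
  finally show ?thesis unfolding set .
qed

context sgraph
begin

lemma AO_empty: "EY Y = {} \<Longrightarrow> card (AO Y) = 1"
proof -
  assume e: "EY Y = {}"
  have "orientations (EY Y) sg = {\<lambda>_. undefined}"
    by (auto simp: e orientations_def PiE_def extensional_def)
  moreover have "\<not> has_cycle {} ends (\<lambda>_. undefined)" by (auto simp: has_cycle_def)
  ultimately have "AO Y = {\<lambda>_. undefined}" by (auto simp: AO_def acyclic_orientation_def e)
  then show ?thesis by simp
qed

lemma finite_AO: "finite (AO Y)"
proof -
  have "AO Y \<subseteq> (EY Y \<times> UNIV) \<rightarrow>\<^sub>E (UNIV :: bool set)" by (auto simp: AO_def orientations_def)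
  moreover have "finite (EY Y)" using finE by (simp add: EY_def)
  ultimately show ?thesis by (meson finite_PiE finite_SigmaI finite_UNIV finite_subset)
qed

lemma sink_source_exists:
  assumes Y: "Y \<subseteq> V" and \<tau>: "\<tau> \<in> AO Y" and ne: "EY Y \<noteq> {}"
  shows "sinks Y (EY Y) ends \<tau> \<noteq> srcs Y (EY Y) \<tau>"
proof -
  have fin: "finite (EY Y)" using finE by (simp add: EY_def)
  have nc: "\<not> has_cycle (EY Y) ends \<tau>" using \<tau> by (simp add: AO_def acyclic_orientation_def)
  then obtain e s where e: "e \<in> EY Y" and
    bad: "\<not> ((\<exists>e'\<in>EY Y. \<exists>s'. endpoint ends e' s' = endpoint ends e s \<and> \<tau> (e', s')) \<and>
            (\<exists>e'\<in>EY Y. \<exists>s'. endpoint ends e' s' = endpoint ends e s \<and> \<not> \<tau> (e', s')))"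
    using cycle_exists[OF fin ne] by blast
  define w where "w = endpoint ends e s"
  have wY: "w \<in> Y" using endpoint_in_Y[OF e] by (simp add: w_def)
  show ?thesis
  proof (cases "\<tau> (e, s)")
    case True
    then have "\<forall>e'\<in>EY Y. \<forall>s'. endpoint ends e' s' = w \<longrightarrow> \<tau> (e', s')" using bad e by (auto simp: w_def)
    then have "w \<in> sinks Y (EY Y) ends \<tau>" using wY by (simp add: sinks_def)
    moreover have "w \<notin> srcs Y (EY Y) \<tau>" using True e by (auto simp: srcs_def w_def)
    ultimately show ?thesis by blast
  next
    case False
    then have "\<forall>e'\<in>EY Y. \<forall>s'. endpoint ends e' s' = w \<longrightarrow> \<not> \<tau> (e', s')" using bad e by (auto simp: w_def)
    then have "w \<in> srcs Y (EY Y) \<tau>" using wY by (simp add: srcs_def)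
    moreover have "w \<notin> sinks Y (EY Y) ends \<tau>" using False e by (auto simp: sinks_def w_def)
    ultimately show ?thesis by blast
  qed
qed

end


context sgraph
begin

lemma card_filter_sum: "finite A \<Longrightarrow> (of_nat (card {x\<in>A. P x}) :: rat) = (\<Sum>x\<in>A. if P x then 1 else 0)"
  by (simp add: sum.inter_filter[symmetric])

lemma AO_rec:
  assumes Y: "Y \<subseteq> V"
  shows "(of_nat (card (AO Y)) :: rat) = (-1) ^ card Y * (if EY Y = {} then 1 else 0) +
     (\<Sum>p\<in>CP' Y. (-1) ^ (card (fst p) + card (snd p) + 1) * of_nat (card (AO (Y - fst p - snd p))))"
proof -
  have finY: "finite Y" using Y finV finite_subset by blast
  define Sk where "Sk \<tau> = sinks Y (EY Y) ends \<tau>" for \<tau>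
  define So where "So \<tau> = srcs Y (EY Y) \<tau>" for \<tau>
  define w where "w p = ((-1::rat) ^ (card (fst p) + card (snd p) + 1))" for p :: "'v set \<times> 'v set"
  define c where "c = ((-1::rat) ^ card Y * (if EY Y = {} then 1 else 0))"
  have SkY: "Sk \<tau> \<subseteq> Y" "So \<tau> \<subseteq> Y" for \<tau> by (auto simp: Sk_def So_def sinks_def srcs_def)
  have c1: "card (AO (Y - fst p - snd p)) = card {\<tau>\<in>AO Y. fst p \<subseteq> Sk \<tau> \<and> snd p \<subseteq> So \<tau>}" if "p \<in> CP' Y" for p
    using that fix_count[of "fst p" Y "snd p"] by (auto simp: CP'_def CP_def Sk_def So_def)
  have "(\<Sum>p\<in>CP' Y. w p * of_nat (card (AO (Y - fst p - snd p))))
      = (\<Sum>p\<in>CP' Y. \<Sum>\<tau>\<in>AO Y. if fst p \<subseteq> Sk \<tau> \<and> snd p \<subseteq> So \<tau> then w p else 0)"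
  proof (rule sum.cong[OF refl])
    fix p assume p: "p \<in> CP' Y"
    show "w p * of_nat (card (AO (Y - fst p - snd p))) = (\<Sum>\<tau>\<in>AO Y. if fst p \<subseteq> Sk \<tau> \<and> snd p \<subseteq> So \<tau> then w p else 0)"
      unfolding c1[OF p] card_filter_sum[OF finite_AO] sum_distrib_left
      by (rule sum.cong[OF refl]) simp
  qed
  also have "\<dots> = (\<Sum>\<tau>\<in>AO Y. \<Sum>p\<in>CP' Y. if fst p \<subseteq> Sk \<tau> \<and> snd p \<subseteq> So \<tau> then w p else 0)"
    by (rule sum.swap)
  also have "\<dots> = (\<Sum>\<tau>\<in>AO Y. 1 - c)"
  proof (rule sum.cong[OF refl])
    fix \<tau> assume \<tau>: "\<tau> \<in> AO Y"
    define D where "D = {p. fst p \<subseteq> Sk \<tau> \<and> snd p \<subseteq> So \<tau> \<and> fst p \<inter> snd p = {}}"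
    have finD: "finite D"
      by (rule finite_subset[of _ "Pow Y \<times> Pow Y"]) (use SkY[of \<tau>] finY in \<open>auto simp: D_def\<close>)
    have filt: "{p\<in>CP' Y. fst p \<subseteq> Sk \<tau> \<and> snd p \<subseteq> So \<tau>} = D - {({}, {})}"
    proof (intro set_eqI iffI)
      fix p assume "p \<in> {p\<in>CP' Y. fst p \<subseteq> Sk \<tau> \<and> snd p \<subseteq> So \<tau>}"
      then show "p \<in> D - {({}, {})}" by (auto simp: CP'_def CP_def D_def)
    next
      fix p assume p: "p \<in> D - {({}, {})}"
      have sub: "fst p \<subseteq> Y" "snd p \<subseteq> Y" "fst p \<inter> snd p = {}" using p SkY[of \<tau>] by (auto simp: D_def)
      have "\<tau> \<in> {\<tau>\<in>AO Y. fst p \<subseteq> sinks Y (EY Y) ends \<tau> \<and> snd p \<subseteq> srcs Y (EY Y) \<tau>}"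
        using \<tau> p by (auto simp: D_def Sk_def So_def)
      then have "card {\<tau>\<in>AO Y. fst p \<subseteq> sinks Y (EY Y) ends \<tau> \<and> snd p \<subseteq> srcs Y (EY Y) \<tau>} \<noteq> 0"
        using finite_AO by (auto simp: card_eq_0_iff)
      then have "compat (fst p) (snd p)" using fix_count[OF sub] by presburger
      then show "p \<in> {p\<in>CP' Y. fst p \<subseteq> Sk \<tau> \<and> snd p \<subseteq> So \<tau>}"
        using p sub by (auto simp: CP'_def CP_def D_def)
    qed
    have "(\<Sum>p\<in>CP' Y. if fst p \<subseteq> Sk \<tau> \<and> snd p \<subseteq> So \<tau> then w p else 0) = (\<Sum>p\<in>D - {({}, {})}. w p)"
      using sum.inter_filter[of "CP' Y" w "\<lambda>p. fst p \<subseteq> Sk \<tau> \<and> snd p \<subseteq> So \<tau>"] finite_CP'[OF finY]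
      by (simp add: filt)
    also have "\<dots> = (\<Sum>p\<in>D. w p) - w ({}, {})"
      using finD by (subst sum_diff1) (auto simp: D_def)
    also have "(\<Sum>p\<in>D. w p) = - (\<Sum>p\<in>D. (-1) ^ (card (fst p) + card (snd p)))"
      by (simp add: w_def sum_negf)
    also have "(\<Sum>p\<in>D. (-1::rat) ^ (card (fst p) + card (snd p))) = (if Sk \<tau> = So \<tau> then (-1) ^ card (Sk \<tau>) else 0)"
      unfolding D_def by (rule pair_sum) (use finite_subset[OF SkY(1) finY] finite_subset[OF SkY(2) finY] in auto)
    also have "(if Sk \<tau> = So \<tau> then (-1::rat) ^ card (Sk \<tau>) else 0) = c"
    proof (cases "EY Y = {}")
      case True
      then have "Sk \<tau> = Y" "So \<tau> = Y" by (auto simp: Sk_def So_def sinks_def srcs_def)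
      then show ?thesis using True by (simp add: c_def)
    next
      case False
      then have "Sk \<tau> \<noteq> So \<tau>" using sink_source_exists[OF Y \<tau>] by (simp add: Sk_def So_def)
      then show ?thesis using False by (simp add: c_def)
    qed
    finally show "(\<Sum>p\<in>CP' Y. if fst p \<subseteq> Sk \<tau> \<and> snd p \<subseteq> So \<tau> then w p else 0) = 1 - c"
      by (simp add: w_def)
  qed
  also have "\<dots> = of_nat (card (AO Y)) * (1 - c)" by simp
  finally have main: "(\<Sum>p\<in>CP' Y. w p * of_nat (card (AO (Y - fst p - snd p)))) = of_nat (card (AO Y)) * (1 - c)" .
  have "of_nat (card (AO Y)) = c + of_nat (card (AO Y)) * (1 - c)"
  proof (cases "EY Y = {}")
    case True then show ?thesis using AO_empty by (simp add: c_def)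
  next
    case False then show ?thesis by (simp add: c_def)
  qed
  then show ?thesis using main by (simp add: c_def w_def)
qed

lemma AO_uu: "Y \<subseteq> V \<Longrightarrow> (of_nat (card (AO Y)) :: rat) = (-1) ^ card Y * uu Y"
proof (induction "card Y" arbitrary: Y rule: less_induct)
  case less
  have finY: "finite Y" using less.prems finV finite_subset by blast
  have IH: "(of_nat (card (AO (Y - fst p - snd p))) :: rat) = (-1) ^ card (Y - fst p - snd p) * uu (Y - fst p - snd p)"
    if "p \<in> CP' Y" for p
    using less.hyps[OF card_CP'_less[OF finY that]] less.prems by blast
  have cardp: "card (Y - fst p - snd p) + card (fst p) + card (snd p) = card Y" if "p \<in> CP' Y" for p
  proof -
    have s: "fst p \<subseteq> Y" "snd p \<subseteq> Y" "fst p \<inter> snd p = {}" using that by (auto simp: CP'_def CP_def)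
    have "card Y = card (Y - (fst p \<union> snd p)) + card (fst p \<union> snd p)"
      using s finY by (subst card_Diff_subset) (auto intro: finite_subset simp: card_mono)
    moreover have "card (fst p \<union> snd p) = card (fst p) + card (snd p)"
      using s finY by (subst card_Un_disjoint) (auto intro: finite_subset)
    moreover have "Y - fst p - snd p = Y - (fst p \<union> snd p)" by blast
    ultimately show ?thesis by simp
  qed
  have trm: "(-1::rat) ^ (card (fst p) + card (snd p) + 1) * of_nat (card (AO (Y - fst p - snd p)))
      = - ((-1) ^ card Y * uu (Y - fst p - snd p))" if "p \<in> CP' Y" for p
  proof -
    have "(-1::rat) ^ (card (fst p) + card (snd p) + 1) * (-1) ^ card (Y - fst p - snd p) = - ((-1) ^ card Y)"
    proof -
      have e: "card (fst p) + card (snd p) + 1 + card (Y - fst p - snd p) = Suc (card Y)" using cardp[OF that] by simp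
      have "(-1::rat) ^ (card (fst p) + card (snd p) + 1) * (-1) ^ card (Y - fst p - snd p)
          = (-1) ^ (card (fst p) + card (snd p) + 1 + card (Y - fst p - snd p))" by (simp only: power_add)
      also have "\<dots> = (-1) ^ Suc (card Y)" by (simp only: e)
      finally show ?thesis by simp
    qed
    then show ?thesis unfolding IH[OF that] by (simp add: mult.assoc[symmetric])
  qed
  have cc0: "cc 0 Y = (if EY Y = {} then 1 else 0)" using cnt_0[OF finY] by simp
  have "(of_nat (card (AO Y)) :: rat) = (-1) ^ card Y * (if EY Y = {} then 1 else 0) +
     (\<Sum>p\<in>CP' Y. - ((-1) ^ card Y * uu (Y - fst p - snd p)))"
    using AO_rec[OF less.prems] trm by simp
  also have "\<dots> = (-1) ^ card Y * (cc 0 Y - (\<Sum>p\<in>CP' Y. uu (Y - fst p - snd p)))"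
    unfolding cc0 by (simp add: sum_negf sum_distrib_left right_diff_distrib)
  also have "\<dots> = (-1) ^ card Y * uu Y" using uu_rec[OF less.prems] by simp
  finally show ?case .
qed

lemma AO_t:
  "(\<Sum>\<tau>\<in>AO V. (t::rat) ^ card (sinks V E ends \<tau>)) =
   (\<Sum>S\<in>Pow V. if compat S {} then (t - 1) ^ card S * of_nat (card (AO (V - S))) else 0)"
proof -
  have Sk: "sinks V E ends \<tau> \<subseteq> V" for \<tau> by (auto simp: sinks_def)
  have "(\<Sum>\<tau>\<in>AO V. t ^ card (sinks V E ends \<tau>)) = (\<Sum>\<tau>\<in>AO V. \<Sum>S\<in>Pow V. if S \<subseteq> sinks V E ends \<tau> then (t - 1) ^ card S else 0)"
  proof (rule sum.cong[OF refl])
    fix \<tau>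
    have fs: "finite (sinks V E ends \<tau>)" using Sk finV finite_subset by blast
    have "t ^ card (sinks V E ends \<tau>) = (\<Prod>x\<in>sinks V E ends \<tau>. (t - 1) + 1)" by simp
    also have "\<dots> = (\<Sum>X\<in>Pow (sinks V E ends \<tau>). (t - 1) ^ card X)"
      by (subst prod_add[OF fs]) simp
    also have "\<dots> = (\<Sum>S\<in>Pow V. if S \<subseteq> sinks V E ends \<tau> then (t - 1) ^ card S else 0)"
    proof -
      have "Pow (sinks V E ends \<tau>) = {S\<in>Pow V. S \<subseteq> sinks V E ends \<tau>}" using Sk by auto
      then show ?thesis using sum.inter_filter[of "Pow V" "\<lambda>S. (t - 1) ^ card S" "\<lambda>S. S \<subseteq> sinks V E ends \<tau>"] finV
        by simp
    qed
    finally show "t ^ card (sinks V E ends \<tau>) = (\<Sum>S\<in>Pow V. if S \<subseteq> sinks V E ends \<tau> then (t - 1) ^ card S else 0)" .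
  qed
  also have "\<dots> = (\<Sum>S\<in>Pow V. \<Sum>\<tau>\<in>AO V. if S \<subseteq> sinks V E ends \<tau> then (t - 1) ^ card S else 0)"
    by (rule sum.swap)
  also have "\<dots> = (\<Sum>S\<in>Pow V. (t - 1) ^ card S * of_nat (card {\<tau>\<in>AO V. S \<subseteq> sinks V E ends \<tau>}))"
  proof (rule sum.cong[OF refl])
    fix S
    show "(\<Sum>\<tau>\<in>AO V. if S \<subseteq> sinks V E ends \<tau> then (t - 1) ^ card S else 0) =
       (t - 1) ^ card S * of_nat (card {\<tau>\<in>AO V. S \<subseteq> sinks V E ends \<tau>})"
      unfolding card_filter_sum[OF finite_AO] sum_distrib_left by (rule sum.cong[OF refl]) simp
  qed
  also have "\<dots> = (\<Sum>S\<in>Pow V. if compat S {} then (t - 1) ^ card S * of_nat (card (AO (V - S))) else 0)"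
  proof (rule sum.cong[OF refl])
    fix S assume "S \<in> Pow V"
    then have S: "S \<subseteq> V" by simp
    have "{\<tau>\<in>AO V. S \<subseteq> sinks V E ends \<tau>} = {\<tau>\<in>AO V. S \<subseteq> sinks V (EY V) ends \<tau> \<and> {} \<subseteq> srcs V (EY V) \<tau>}"
      by (simp add: EY_V)
    then have "card {\<tau>\<in>AO V. S \<subseteq> sinks V E ends \<tau>} = (if compat S {} then card (AO (V - S)) else 0)"
      using fix_count[OF S, of "{}"] by simp
    then show "(t - 1) ^ card S * of_nat (card {\<tau>\<in>AO V. S \<subseteq> sinks V E ends \<tau>}) =
      (if compat S {} then (t - 1) ^ card S * of_nat (card (AO (V - S))) else 0)" by simp
  qed
  finally show ?thesis .
qed

end


definition pf :: "(rat \<Rightarrow> rat) \<Rightarrow> bool" where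
  "pf f \<longleftrightarrow> (\<exists>p. \<forall>x. f x = poly p x)"

lemma pf_const: "pf (\<lambda>x. c)"
  unfolding pf_def by (rule exI[of _ "[:c:]"]) simp

lemma pf_lin: "pf (\<lambda>x. a + x * b)"
  unfolding pf_def by (rule exI[of _ "[:a, b:]"]) simp

lemma pf_add: "pf f \<Longrightarrow> pf g \<Longrightarrow> pf (\<lambda>x. f x + g x)"
  unfolding pf_def by (metis poly_add)

lemma pf_mult: "pf f \<Longrightarrow> pf g \<Longrightarrow> pf (\<lambda>x. f x * g x)"
  unfolding pf_def by (metis poly_mult)

lemma pf_sum: "(\<And>a. a \<in> A \<Longrightarrow> pf (f a)) \<Longrightarrow> pf (\<lambda>x. \<Sum>a\<in>A. f a x)"
proof (induction A rule: infinite_finite_induct)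
  case (infinite A) then show ?case by (simp add: pf_const)
next
  case empty then show ?case by (simp add: pf_const)
next
  case (insert a F) then show ?case by (simp add: pf_add)
qed

lemma pf_prod: "(\<And>a. a \<in> A \<Longrightarrow> pf (f a)) \<Longrightarrow> pf (\<lambda>x. \<Prod>a\<in>A. f a x)"
proof (induction A rule: infinite_finite_induct)
  case (infinite A) then show ?case by (simp add: pf_const)
next
  case empty then show ?case by (simp add: pf_const)
next
  case (insert a F) then show ?case by (simp add: pf_mult)
qed

lemma pf_pow: "pf f \<Longrightarrow> pf (\<lambda>x. f x ^ n)"
  by (induction n) (simp_all add: pf_const pf_mult)

lemma pf_gchoose: "pf (\<lambda>x. x gchoose j)"
proof -
  have "pf (\<lambda>x. \<Prod>i = 0..<j. (x - of_nat i) / of_nat (j - i))"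
  proof (rule pf_prod)
    fix i
    have eq: "(\<lambda>x::rat. (x - of_nat i) / of_nat (j - i)) = (\<lambda>x. (- of_nat i / of_nat (j - i)) + x * (1 / of_nat (j - i)))"
      by (simp add: fun_eq_iff diff_divide_distrib)
    show "pf (\<lambda>x::rat. (x - of_nat i) / of_nat (j - i))" unfolding eq by (rule pf_lin)
  qed
  then show ?thesis by (simp add: gbinomial_altdef_of_nat)
qed

lemma pf_agree:
  assumes "pf f" "pf g" "\<And>n::nat. f (of_nat n) = g (of_nat n)"
  shows "f x = g x"
proof -
  obtain p q where p: "\<forall>x. f x = poly p x" and q: "\<forall>x. g x = poly q x" using assms(1,2) by (auto simp: pf_def)
  have "p - q = 0"
  proof (rule ccontr)
    assume ne: "p - q \<noteq> 0"
    have "range (of_nat :: nat \<Rightarrow> rat) \<subseteq> {x. poly (p - q) x = 0}" using assms(3) p q by auto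
    moreover have "infinite (range (of_nat :: nat \<Rightarrow> rat))"
      by (rule range_inj_infinite) (simp add: inj_on_def)
    ultimately show False using poly_roots_finite[OF ne] finite_subset by blast
  qed
  then show ?thesis using p q by simp
qed

lemma pf_egen: "pf (egen t g)"
proof (cases g)
  case (Xi j)
  have eq: "egen t g = (\<lambda>x. (t ^ j - 2) + x * (-2))" by (auto simp: Xi fun_eq_iff)
  show ?thesis unfolding eq by (rule pf_lin)
next
  case (Q a b)
  have eq: "egen t g = (\<lambda>x. (-1) + x * (-2))" by (auto simp: Q fun_eq_iff)
  show ?thesis unfolding eq by (rule pf_lin)
next
  case Z
  have eq: "egen t g = (\<lambda>x. 1)" by (auto simp: Z fun_eq_iff)
  show ?thesis unfolding eq by (rule pf_const)
qed

lemma egen_m1: "valid_gen g \<Longrightarrow> egen t g (-1) = t ^ xi_index g"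
  by (cases g) auto


lemma gchoose_m1: "((-1)::rat) gchoose j = (-1) ^ j"
proof -
  have "(- (1::rat)) gchoose j = (-1) ^ j * (1 + of_nat j - 1 gchoose j)" by (rule gbinomial_minus)
  also have "(1 + of_nat j - 1 :: rat) gchoose j = 1"
    using binomial_gbinomial[of j j, where 'a=rat] by simp
  finally show ?thesis by simp
qed

theorem theorem3p4:
  fixes V :: "'v set" and E :: "'e set" and ends :: "'e \<Rightarrow> 'v \<times> 'v" and sg :: "'e \<Rightarrow> bool"
    and P :: "(gen \<Rightarrow>\<^sub>0 nat) \<Rightarrow>\<^sub>0 rat" and k :: nat
  assumes "finite V" and "finite E"
    and "\<forall>e\<in>E. fst (ends e) \<in> V \<and> snd (ends e) \<in> V"
    and "\<forall>\<mu>\<in>Poly_Mapping.keys P. \<forall>g\<in>Poly_Mapping.keys \<mu>. valid_gen g"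
    and "poly_eval P = chromB V E ends sg"
  shows "of_nat (card {\<tau> \<in> orientations E sg.
             acyclic_orientation E ends \<tau> \<and> card (sinks V E ends \<tau>) = k})
         = (\<Sum>\<mu> \<in> {\<mu> \<in> Poly_Mapping.keys P. xi_deg \<mu> = k}. Poly_Mapping.lookup P \<mu>)"
proof -
  interpret S: sgraph V E ends sg using assms(1-3) by unfold_locales auto
  have key: "(\<Sum>\<mu>\<in>Poly_Mapping.keys P. Poly_Mapping.lookup P \<mu> * t ^ xi_deg \<mu>) =
             (\<Sum>\<tau>\<in>S.AO V. t ^ card (sinks V E ends \<tau>))" for t :: rat
  proof -
    define ind where "ind S = (if S.compat S {} then 1 else 0 :: rat)" for S
    define A where "A S = (t - 1) ^ card S * (-1) ^ card (V - S)" for S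
    define LHSf where "LHSf x = (\<Sum>\<mu>\<in>Poly_Mapping.keys P. Poly_Mapping.lookup P \<mu> *
        (\<Prod>g\<in>Poly_Mapping.keys \<mu>. egen t g x ^ Poly_Mapping.lookup \<mu> g))" for x
    define b where "b j = (\<Sum>S\<in>Pow V. ind S * A S * S.cc j (V - S))" for j
    define RHSf where "RHSf x = (\<Sum>j\<le>Suc (card V). (x gchoose j) * b j)" for x
    have agree: "LHSf (of_nat n) = RHSf (of_nat n)" for n
    proof -
      have "LHSf (of_nat n) = ev (Cn n) (vt t) (poly_eval P)"
        using ev_poly_eval[OF assms(4)] by (simp add: LHSf_def)
      also have "\<dots> = ev (Cn n) (vt t) (chromB V E ends sg)" using assms(5) by simp
      also have "\<dots> = (\<Sum>\<kappa>\<in>S.KK n. \<Prod>v\<in>V. vt t (\<kappa> v))"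
        using ev_chromB[OF assms(1)] by (simp add: S.KK_def)
      also have "\<dots> = (\<Sum>S\<in>Pow V. if S.compat S {} then (t - 1) ^ card S * (-1) ^ card (V - S) * of_nat (S.cnt (V - S) n) else 0)"
        by (rule S.decomp_S)
      also have "\<dots> = (\<Sum>S\<in>Pow V. ind S * A S * (\<Sum>j\<le>Suc (card V). of_nat (n choose j) * S.cc j (V - S)))"
      proof (rule sum.cong[OF refl])
        fix S assume "S \<in> Pow V"
        then have "finite (V - S)" "card (V - S) \<le> card V" using assms(1) by (auto simp: card_mono)
        then have "of_nat (S.cnt (V - S) n) = (\<Sum>j\<le>Suc (card V). of_nat (n choose j) * S.cc j (V - S))"
          by (rule S.cnt_binom)
        then show "(if S.compat S {} then (t - 1) ^ card S * (-1) ^ card (V - S) * of_nat (S.cnt (V - S) n) else 0) =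
            ind S * A S * (\<Sum>j\<le>Suc (card V). of_nat (n choose j) * S.cc j (V - S))"
          by (simp add: ind_def A_def)
      qed
      also have "\<dots> = (\<Sum>S\<in>Pow V. \<Sum>j\<le>Suc (card V). of_nat (n choose j) * (ind S * A S * S.cc j (V - S)))"
        by (simp only: sum_distrib_left ac_simps)
      also have "\<dots> = (\<Sum>j\<le>Suc (card V). \<Sum>S\<in>Pow V. of_nat (n choose j) * (ind S * A S * S.cc j (V - S)))"
        by (rule sum.swap)
      also have "\<dots> = (\<Sum>j\<le>Suc (card V). of_nat (n choose j) * b j)"
        by (simp only: b_def sum_distrib_left)
      also have "\<dots> = RHSf (of_nat n)"
        by (simp add: RHSf_def binomial_gbinomial)
      finally show ?thesis .
    qed
    have pfL: "pf LHSf"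
      unfolding LHSf_def by (intro pf_sum pf_mult pf_const pf_prod pf_pow pf_egen)
    have pfR: "pf RHSf"
      unfolding RHSf_def by (intro pf_sum pf_mult pf_gchoose pf_const)
    have m1: "LHSf (-1) = RHSf (-1)" by (rule pf_agree[OF pfL pfR agree])
    have L: "LHSf (-1) = (\<Sum>\<mu>\<in>Poly_Mapping.keys P. Poly_Mapping.lookup P \<mu> * t ^ xi_deg \<mu>)"
      unfolding LHSf_def
    proof (rule sum.cong[OF refl])
      fix \<mu> assume \<mu>: "\<mu> \<in> Poly_Mapping.keys P"
      have "(\<Prod>g\<in>Poly_Mapping.keys \<mu>. egen t g (-1) ^ Poly_Mapping.lookup \<mu> g) =
          (\<Prod>g\<in>Poly_Mapping.keys \<mu>. t ^ (xi_index g * Poly_Mapping.lookup \<mu> g))"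
      proof (rule prod.cong[OF refl])
        fix g assume "g \<in> Poly_Mapping.keys \<mu>"
        then have "valid_gen g" using assms(4) \<mu> by blast
        then show "egen t g (-1) ^ Poly_Mapping.lookup \<mu> g = t ^ (xi_index g * Poly_Mapping.lookup \<mu> g)"
          by (simp add: egen_m1 power_mult)
      qed
      also have "\<dots> = t ^ xi_deg \<mu>" by (simp add: xi_deg_def power_sum)
      finally show "Poly_Mapping.lookup P \<mu> * (\<Prod>g\<in>Poly_Mapping.keys \<mu>. egen t g (-1) ^ Poly_Mapping.lookup \<mu> g) =
          Poly_Mapping.lookup P \<mu> * t ^ xi_deg \<mu>" by simp
    qed
    have R: "RHSf (-1) = (\<Sum>\<tau>\<in>S.AO V. t ^ card (sinks V E ends \<tau>))"
    proof -
      have "RHSf (-1) = (\<Sum>j\<le>Suc (card V). \<Sum>S\<in>Pow V. (-1) ^ j * (ind S * A S * S.cc j (V - S)))"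
        by (simp only: RHSf_def gchoose_m1 b_def sum_distrib_left)
      also have "\<dots> = (\<Sum>S\<in>Pow V. \<Sum>j\<le>Suc (card V). (-1) ^ j * (ind S * A S * S.cc j (V - S)))"
        by (rule sum.swap)
      also have "\<dots> = (\<Sum>S\<in>Pow V. ind S * A S * S.uu (V - S))"
        by (simp only: S.uu_def sum_distrib_left ac_simps)
      also have "\<dots> = (\<Sum>S\<in>Pow V. if S.compat S {} then (t - 1) ^ card S * of_nat (card (S.AO (V - S))) else 0)"
      proof (rule sum.cong[OF refl])
        fix S assume "S \<in> Pow V"
        then have "of_nat (card (S.AO (V - S))) = (-1) ^ card (V - S) * S.uu (V - S)"
          by (intro S.AO_uu) auto
        then show "ind S * A S * S.uu (V - S) = (if S.compat S {} then (t - 1) ^ card S * of_nat (card (S.AO (V - S))) else 0)"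
          by (simp add: ind_def A_def)
      qed
      also have "\<dots> = (\<Sum>\<tau>\<in>S.AO V. t ^ card (sinks V E ends \<tau>))"
        by (rule S.AO_t[symmetric])
      finally show ?thesis .
    qed
    show ?thesis using m1 L R by simp
  qed
  define pA where "pA = (\<Sum>\<mu>\<in>Poly_Mapping.keys P. monom (Poly_Mapping.lookup P \<mu>) (xi_deg \<mu>))"
  define pB where "pB = (\<Sum>\<tau>\<in>S.AO V. monom (1::rat) (card (sinks V E ends \<tau>)))"
  have "\<forall>t. poly (pA - pB) t = 0"
    using key by (simp add: pA_def pB_def poly_sum poly_monom)
  then have "pA - pB = 0" using poly_all_0_iff_0 by blast
  then have "pA = pB" by simp
  then have "coeff pA k = coeff pB k" by simp
  moreover have "coeff pA k = (\<Sum>\<mu> \<in> {\<mu> \<in> Poly_Mapping.keys P. xi_deg \<mu> = k}. Poly_Mapping.lookup P \<mu>)"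
    unfolding pA_def coeff_sum coeff_monom
    using sum.inter_filter[of "Poly_Mapping.keys P" "Poly_Mapping.lookup P" "\<lambda>\<mu>. xi_deg \<mu> = k"]
    by simp
  moreover have "coeff pB k = of_nat (card {\<tau>\<in>S.AO V. card (sinks V E ends \<tau>) = k})"
    unfolding pB_def coeff_sum coeff_monom S.card_filter_sum[OF S.finite_AO]
    by (rule sum.cong) auto
  moreover have "{\<tau>\<in>S.AO V. card (sinks V E ends \<tau>) = k} =
      {\<tau> \<in> orientations E sg. acyclic_orientation E ends \<tau> \<and> card (sinks V E ends \<tau>) = k}"
    by (auto simp: S.AO_def S.EY_V)
  ultimately show ?thesis by simp
qed


end
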